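(* Let $M$ be a smooth manifold, let $\nabla$ be an affine connection on $M$, and let $\hat J_1,\hat J_2$ be generalized almost product structures on $M$ (i.e. bundle endomorphisms of $TM\oplus T^*M$ with $\hat J_1^2=\hat J_2^2=I$) such that $\hat J_1\hat J_2=-\hat J_2\hat J_1$, and put $\hat J:=\hat J_1\hat J_2$, so that $(\hat J_1,\hat J_2,\hat J)$ is a generalized almost para-quaternionic structure. Let $V_1$ and $V_2$ be the $+1$- and $-1$-eigenbundles of $\hat J_1$. Then there exists a unique generalized affine connection $D$ on $M$ such that (i) $D\hat J_1=D\hat J_2=D\hat J=0$; (ii) $T^D(\sigma,\tau)=0$ for every $\sigma\in\Gamma^\infty(V_1)$ and every $\tau\in\Gamma^\infty(V_2)$, where $T^D(\sigma,\tau):=D_\sigma\tau-D_\tau\sigma-[\sigma,\tau]_\nabla$.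
   Context: The $\nabla$-bracket on $\Gamma^\infty(TM\oplus T^*M)$ is $[X+\eta,Y+\beta]_\nabla:=[X,Y]+\nabla_X\beta-\nabla_Y\eta$ for vector fields $X,Y$ and 1-forms $\eta,\beta$ (with $\nabla$ acting on 1-forms as the induced connection). A generalized affine connection on $M$ is an $\mathbb R$-bilinear map $D:\Gamma^\infty(TM\oplus T^*M)\times\Gamma^\infty(TM\oplus T^*M)\to\Gamma^\infty(TM\oplus T^*M)$ with $D_{f\sigma}\tau=fD_\sigma\tau$ and $D_\sigma(f\tau)=\sigma(f)\tau+fD_\sigma\tau$ for $f\in C^\infty(M)$, where $(X+\eta)(f):=X(f)$. For an endomorphism $\hat K$, $(D_\sigma\hat K)\tau:=D_\sigma(\hat K\tau)-\hat K(D_\sigma\tau)$. This $D$ is called the canonical connection of $(\hat J_1,\hat J_2,\nabla)$. *)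

theory Defs
  imports "HOL-Analysis.Analysis"
begin

coinductive c_inf :: "'e::euclidean_space set \<Rightarrow> ('e \<Rightarrow> real) \<Rightarrow> bool" for U where
  "f differentiable_on U \<Longrightarrow> (\<forall>v. c_inf U (\<lambda>x. frechet_derivative f (at x) v)) \<Longrightarrow> c_inf U f"

definition smooth_atlas :: "'a topology \<Rightarrow> ('a set \<times> ('a \<Rightarrow> 'e::euclidean_space)) set \<Rightarrow> bool" where
  "smooth_atlas M A \<longleftrightarrow>
     (\<forall>(U,\<phi>)\<in>A. openin M U \<and> open (\<phi> ` U) \<and>
                   homeomorphic_map (subtopology M U) (top_of_set (\<phi> ` U)) \<phi>) \<and>
     (\<Union>(U,\<phi>)\<in>A. U) = topspace M \<and>
     (\<forall>(U,\<phi>)\<in>A. \<forall>(V,\<psi>)\<in>A. \<forall>b\<in>Basis.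
         c_inf (\<phi> ` (U \<inter> V)) (\<lambda>x. \<psi> (inv_into U \<phi> x) \<bullet> b))"

definition smooth_manifold :: "'a topology \<Rightarrow> ('a set \<times> ('a \<Rightarrow> 'e::euclidean_space)) set \<Rightarrow> bool" where
  "smooth_manifold M A \<longleftrightarrow> Hausdorff_space M \<and> second_countable M \<and> smooth_atlas M A"

text \<open>C-infinity functions on M (normalised to be 0 off the carrier).\<close>
definition smooth_fun :: "'a topology \<Rightarrow> ('a set \<times> ('a \<Rightarrow> 'e::euclidean_space)) set \<Rightarrow> ('a \<Rightarrow> real) \<Rightarrow> bool" where
  "smooth_fun M A f \<longleftrightarrow> (\<forall>(U,\<phi>)\<in>A. c_inf (\<phi> ` U) (f \<circ> inv_into U \<phi>)) \<and>
                         (\<forall>x. x \<notin> topspace M \<longrightarrow> f x = 0)"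

type_synonym 'a vf = "('a \<Rightarrow> real) \<Rightarrow> ('a \<Rightarrow> real)"
type_synonym 'a form = "'a vf \<Rightarrow> ('a \<Rightarrow> real)"
type_synonym 'a gsec = "'a vf \<times> 'a form"

text \<open>Smooth vector fields = derivations of the algebra of smooth functions
  (normalised to 0 on non-smooth arguments).\<close>
definition vector_field :: "'a topology \<Rightarrow> ('a set \<times> ('a \<Rightarrow> 'e::euclidean_space)) set \<Rightarrow> 'a vf \<Rightarrow> bool" where
  "vector_field M A X \<longleftrightarrow>
     (\<forall>f. smooth_fun M A f \<longrightarrow> smooth_fun M A (X f)) \<and>
     (\<forall>f. \<not> smooth_fun M A f \<longrightarrow> X f = (\<lambda>_. 0)) \<and>
     (\<forall>f g. smooth_fun M A f \<longrightarrow> smooth_fun M A g \<longrightarrow>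
          X (\<lambda>x. f x + g x) = (\<lambda>x. X f x + X g x) \<and>
          X (\<lambda>x. f x * g x) = (\<lambda>x. f x * X g x + g x * X f x)) \<and>
     (\<forall>c f. smooth_fun M A f \<longrightarrow> X (\<lambda>x. c * f x) = (\<lambda>x. c * X f x))"

definition vf_add :: "'a vf \<Rightarrow> 'a vf \<Rightarrow> 'a vf" where
  "vf_add X Y = (\<lambda>f x. X f x + Y f x)"

definition vf_smul :: "('a \<Rightarrow> real) \<Rightarrow> 'a vf \<Rightarrow> 'a vf" where
  "vf_smul g X = (\<lambda>f x. g x * X f x)"

definition vf_rsmul :: "real \<Rightarrow> 'a vf \<Rightarrow> 'a vf" where
  "vf_rsmul c X = (\<lambda>f x. c * X f x)"

definition lie :: "'a vf \<Rightarrow> 'a vf \<Rightarrow> 'a vf" where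
  "lie X Y = (\<lambda>f x. X (Y f) x - Y (X f) x)"

definition one_form :: "'a topology \<Rightarrow> ('a set \<times> ('a \<Rightarrow> 'e::euclidean_space)) set \<Rightarrow> 'a form \<Rightarrow> bool" where
  "one_form M A \<eta> \<longleftrightarrow>
     (\<forall>X. vector_field M A X \<longrightarrow> smooth_fun M A (\<eta> X)) \<and>
     (\<forall>X. \<not> vector_field M A X \<longrightarrow> \<eta> X = (\<lambda>_. 0)) \<and>
     (\<forall>X Y. vector_field M A X \<longrightarrow> vector_field M A Y \<longrightarrow>
          \<eta> (vf_add X Y) = (\<lambda>x. \<eta> X x + \<eta> Y x)) \<and>
     (\<forall>g X. smooth_fun M A g \<longrightarrow> vector_field M A X \<longrightarrow>
          \<eta> (vf_smul g X) = (\<lambda>x. g x * \<eta> X x))"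

definition gsection :: "'a topology \<Rightarrow> ('a set \<times> ('a \<Rightarrow> 'e::euclidean_space)) set \<Rightarrow> 'a gsec \<Rightarrow> bool" where
  "gsection M A \<sigma> \<longleftrightarrow> vector_field M A (fst \<sigma>) \<and> one_form M A (snd \<sigma>)"

definition szero :: "'a gsec" where
  "szero = ((\<lambda>f x. 0), (\<lambda>X x. 0))"

definition sadd :: "'a gsec \<Rightarrow> 'a gsec \<Rightarrow> 'a gsec" where
  "sadd \<sigma> \<tau> = ((\<lambda>f x. fst \<sigma> f x + fst \<tau> f x), (\<lambda>X x. snd \<sigma> X x + snd \<tau> X x))"

definition ssub :: "'a gsec \<Rightarrow> 'a gsec \<Rightarrow> 'a gsec" where
  "ssub \<sigma> \<tau> = ((\<lambda>f x. fst \<sigma> f x - fst \<tau> f x), (\<lambda>X x. snd \<sigma> X x - snd \<tau> X x))"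

definition sneg :: "'a gsec \<Rightarrow> 'a gsec" where
  "sneg \<sigma> = ((\<lambda>f x. - fst \<sigma> f x), (\<lambda>X x. - snd \<sigma> X x))"

definition ssmul :: "('a \<Rightarrow> real) \<Rightarrow> 'a gsec \<Rightarrow> 'a gsec" where
  "ssmul g \<sigma> = ((\<lambda>f x. g x * fst \<sigma> f x), (\<lambda>X x. g x * snd \<sigma> X x))"

definition srsmul :: "real \<Rightarrow> 'a gsec \<Rightarrow> 'a gsec" where
  "srsmul c \<sigma> = ((\<lambda>f x. c * fst \<sigma> f x), (\<lambda>X x. c * snd \<sigma> X x))"

definition affine_connection ::
  "'a topology \<Rightarrow> ('a set \<times> ('a \<Rightarrow> 'e::euclidean_space)) set \<Rightarrow> ('a vf \<Rightarrow> 'a vf \<Rightarrow> 'a vf) \<Rightarrow> bool" where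
  "affine_connection M A nabla \<longleftrightarrow>
     (\<forall>X Y. vector_field M A X \<longrightarrow> vector_field M A Y \<longrightarrow> vector_field M A (nabla X Y)) \<and>
     (\<forall>X Y. \<not> (vector_field M A X \<and> vector_field M A Y) \<longrightarrow> nabla X Y = (\<lambda>f x. 0)) \<and>
     (\<forall>X X' Y. vector_field M A X \<longrightarrow> vector_field M A X' \<longrightarrow> vector_field M A Y \<longrightarrow>
        nabla (vf_add X X') Y = vf_add (nabla X Y) (nabla X' Y) \<and>
        nabla Y (vf_add X X') = vf_add (nabla Y X) (nabla Y X')) \<and>
     (\<forall>c X Y. vector_field M A X \<longrightarrow> vector_field M A Y \<longrightarrow>
        nabla (vf_rsmul c X) Y = vf_rsmul c (nabla X Y) \<and>
        nabla X (vf_rsmul c Y) = vf_rsmul c (nabla X Y)) \<and>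
     (\<forall>g X Y. smooth_fun M A g \<longrightarrow> vector_field M A X \<longrightarrow> vector_field M A Y \<longrightarrow>
        nabla (vf_smul g X) Y = vf_smul g (nabla X Y) \<and>
        nabla X (vf_smul g Y) = vf_add (vf_smul (X g) Y) (vf_smul g (nabla X Y)))"

definition nabla_form ::
  "'a topology \<Rightarrow> ('a set \<times> ('a \<Rightarrow> 'e::euclidean_space)) set \<Rightarrow> ('a vf \<Rightarrow> 'a vf \<Rightarrow> 'a vf) \<Rightarrow> 'a vf \<Rightarrow> 'a form \<Rightarrow> 'a form" where
  "nabla_form M A nabla X \<eta> =
     (\<lambda>Y x. if vector_field M A Y then X (\<eta> Y) x - \<eta> (nabla X Y) x else 0)"

definition nabla_bracket ::
  "'a topology \<Rightarrow> ('a set \<times> ('a \<Rightarrow> 'e::euclidean_space)) set \<Rightarrow> ('a vf \<Rightarrow> 'a vf \<Rightarrow> 'a vf) \<Rightarrow> 'a gsec \<Rightarrow> 'a gsec \<Rightarrow> 'a gsec" where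
  "nabla_bracket M A nabla \<sigma> \<tau> =
     (lie (fst \<sigma>) (fst \<tau>),
      (\<lambda>Y x. nabla_form M A nabla (fst \<sigma>) (snd \<tau>) Y x - nabla_form M A nabla (fst \<tau>) (snd \<sigma>) Y x))"

text \<open>Smooth bundle endomorphisms of TM + T*M = C-infinity-linear maps on smooth sections
  (normalised to 0 off the sections).\<close>
definition bundle_endo ::
  "'a topology \<Rightarrow> ('a set \<times> ('a \<Rightarrow> 'e::euclidean_space)) set \<Rightarrow> ('a gsec \<Rightarrow> 'a gsec) \<Rightarrow> bool" where
  "bundle_endo M A K \<longleftrightarrow>
     (\<forall>\<sigma>. gsection M A \<sigma> \<longrightarrow> gsection M A (K \<sigma>)) \<and>
     (\<forall>\<sigma>. \<not> gsection M A \<sigma> \<longrightarrow> K \<sigma> = szero) \<and>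
     (\<forall>\<sigma> \<tau>. gsection M A \<sigma> \<longrightarrow> gsection M A \<tau> \<longrightarrow> K (sadd \<sigma> \<tau>) = sadd (K \<sigma>) (K \<tau>)) \<and>
     (\<forall>g \<sigma>. smooth_fun M A g \<longrightarrow> gsection M A \<sigma> \<longrightarrow> K (ssmul g \<sigma>) = ssmul g (K \<sigma>))"

definition gen_almost_product ::
  "'a topology \<Rightarrow> ('a set \<times> ('a \<Rightarrow> 'e::euclidean_space)) set \<Rightarrow> ('a gsec \<Rightarrow> 'a gsec) \<Rightarrow> bool" where
  "gen_almost_product M A K \<longleftrightarrow>
     bundle_endo M A K \<and> (\<forall>\<sigma>. gsection M A \<sigma> \<longrightarrow> K (K \<sigma>) = \<sigma>)"

definition gen_affine_connection ::
  "'a topology \<Rightarrow> ('a set \<times> ('a \<Rightarrow> 'e::euclidean_space)) set \<Rightarrow> ('a gsec \<Rightarrow> 'a gsec \<Rightarrow> 'a gsec) \<Rightarrow> bool" where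
  "gen_affine_connection M A D \<longleftrightarrow>
     (\<forall>\<sigma> \<tau>. gsection M A \<sigma> \<longrightarrow> gsection M A \<tau> \<longrightarrow> gsection M A (D \<sigma> \<tau>)) \<and>
     (\<forall>\<sigma> \<tau>. \<not> (gsection M A \<sigma> \<and> gsection M A \<tau>) \<longrightarrow> D \<sigma> \<tau> = szero) \<and>
     (\<forall>\<sigma> \<sigma>' \<tau>. gsection M A \<sigma> \<longrightarrow> gsection M A \<sigma>' \<longrightarrow> gsection M A \<tau> \<longrightarrow>
        D (sadd \<sigma> \<sigma>') \<tau> = sadd (D \<sigma> \<tau>) (D \<sigma>' \<tau>) \<and>
        D \<tau> (sadd \<sigma> \<sigma>') = sadd (D \<tau> \<sigma>) (D \<tau> \<sigma>')) \<and>
     (\<forall>c \<sigma> \<tau>. gsection M A \<sigma> \<longrightarrow> gsection M A \<tau> \<longrightarrow>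
        D (srsmul c \<sigma>) \<tau> = srsmul c (D \<sigma> \<tau>) \<and>
        D \<sigma> (srsmul c \<tau>) = srsmul c (D \<sigma> \<tau>)) \<and>
     (\<forall>g \<sigma> \<tau>. smooth_fun M A g \<longrightarrow> gsection M A \<sigma> \<longrightarrow> gsection M A \<tau> \<longrightarrow>
        D (ssmul g \<sigma>) \<tau> = ssmul g (D \<sigma> \<tau>) \<and>
        D \<sigma> (ssmul g \<tau>) = sadd (ssmul (fst \<sigma> g) \<tau>) (ssmul g (D \<sigma> \<tau>)))"

definition cov_endo :: "('a gsec \<Rightarrow> 'a gsec \<Rightarrow> 'a gsec) \<Rightarrow> ('a gsec \<Rightarrow> 'a gsec) \<Rightarrow> 'a gsec \<Rightarrow> 'a gsec \<Rightarrow> 'a gsec" where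
  "cov_endo D K \<sigma> \<tau> = ssub (D \<sigma> (K \<tau>)) (K (D \<sigma> \<tau>))"

definition gen_torsion ::
  "'a topology \<Rightarrow> ('a set \<times> ('a \<Rightarrow> 'e::euclidean_space)) set \<Rightarrow> ('a vf \<Rightarrow> 'a vf \<Rightarrow> 'a vf) \<Rightarrow>
   ('a gsec \<Rightarrow> 'a gsec \<Rightarrow> 'a gsec) \<Rightarrow> 'a gsec \<Rightarrow> 'a gsec \<Rightarrow> 'a gsec" where
  "gen_torsion M A nabla D \<sigma> \<tau> = ssub (ssub (D \<sigma> \<tau>) (D \<tau> \<sigma>)) (nabla_bracket M A nabla \<sigma> \<tau>)"

end

theory Submission
  imports Defs
begin



definition psum :: "(('e \<Rightarrow> real) \<times> ('e \<Rightarrow> real)) list \<Rightarrow> 'e \<Rightarrow> real" where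
  "psum ps x = sum_list (map (\<lambda>(f,g). f x * g x) ps)"

definition pder :: "(('e::euclidean_space \<Rightarrow> real) \<times> ('e \<Rightarrow> real)) list \<Rightarrow> 'e \<Rightarrow> (('e \<Rightarrow> real) \<times> ('e \<Rightarrow> real)) list" where
  "pder ps v = concat (map (\<lambda>(f,g). [(f, \<lambda>x. frechet_derivative g (at x) v), (\<lambda>x. frechet_derivative f (at x) v, g)]) ps)"

lemma psum_Nil[simp]: "psum [] x = 0" by (simp add: psum_def)
lemma psum_Cons[simp]: "psum (p # ps) x = fst p x * snd p x + psum ps x"
  by (cases p) (simp add: psum_def)
lemma pder_Nil[simp]: "pder [] v = []" by (simp add: pder_def)
lemma pder_Cons[simp]: "pder (p # ps) v = [(fst p, \<lambda>x. frechet_derivative (snd p) (at x) v), (\<lambda>x. frechet_derivative (fst p) (at x) v, snd p)] @ pder ps v"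
  by (cases p) (simp add: pder_def)

lemma psum_deriv:
  assumes "\<forall>p\<in>set ps. fst p differentiable (at x) \<and> snd p differentiable (at x)"
  shows "(psum ps has_derivative (\<lambda>v. psum (pder ps v) x)) (at x)"
  using assms
proof (induction ps)
  case Nil
  then show ?case by (simp add: psum_def[abs_def] has_derivative_const)
next
  case (Cons p ps)
  obtain f g where p: "p = (f,g)" by (cases p)
  have df: "(f has_derivative frechet_derivative f (at x)) (at x)"
    using Cons.prems p frechet_derivative_works by auto
  have dg: "(g has_derivative frechet_derivative g (at x)) (at x)"
    using Cons.prems p frechet_derivative_works by auto
  have "((\<lambda>y. f y * g y) has_derivative (\<lambda>v. f x * frechet_derivative g (at x) v + frechet_derivative f (at x) v * g x)) (at x)"
    by (rule has_derivative_mult[OF df dg])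
  from has_derivative_add[OF this Cons.IH] Cons.prems
  show ?case by (simp add: p algebra_simps)
qed

lemma cinf_psum:
  assumes U: "open U"
    and ps: "\<forall>p\<in>set ps. c_inf U (fst p) \<and> c_inf U (snd p)"
    and h: "\<forall>x\<in>U. h x = psum ps x"
  shows "c_inf U h"
proof -
  let ?X = "\<lambda>h. \<exists>ps. (\<forall>p\<in>set ps. c_inf U (fst p) \<and> c_inf U (snd p)) \<and> (\<forall>x\<in>U. h x = psum ps x)"
  have "?X h" using ps h by blast
  then show ?thesis
  proof (coinduction arbitrary: h rule: c_inf.coinduct)
    case (c_inf h)
    then obtain ps where ps: "\<forall>p\<in>set ps. c_inf U (fst p) \<and> c_inf U (snd p)"
      and h: "\<forall>x\<in>U. h x = psum ps x" by blast
    have diff: "\<forall>p\<in>set ps. fst p differentiable (at x) \<and> snd p differentiable (at x)" if "x \<in> U" for x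
    proof
      fix p assume "p \<in> set ps"
      then have "c_inf U (fst p)" "c_inf U (snd p)" using ps by auto
      then have "fst p differentiable_on U" "snd p differentiable_on U"
        by (auto elim: c_inf.cases)
      then show "fst p differentiable (at x) \<and> snd p differentiable (at x)"
        using differentiable_on_eq_differentiable_at[OF U] that by auto
    qed
    have hd: "(h has_derivative (\<lambda>v. psum (pder ps v) x)) (at x)" if "x \<in> U" for x
      using has_derivative_transform_within_open[OF psum_deriv[OF diff[OF that]] U that] h by auto
    have fd: "frechet_derivative h (at x) v = psum (pder ps v) x" if "x \<in> U" for x v
      using fun_cong[OF frechet_derivative_at[OF hd[OF that]], of v] by simp
    have "h differentiable_on U"
      using hd differentiable_on_eq_differentiable_at[OF U] unfolding differentiable_def by blast
    moreover have "\<forall>p\<in>set (pder ps v). c_inf U (fst p) \<and> c_inf U (snd p)" for v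
      using ps
    proof (induction ps)
      case Nil then show ?case by simp
    next
      case (Cons p ps)
      have "c_inf U (\<lambda>x. frechet_derivative (fst p) (at x) v)" "c_inf U (\<lambda>x. frechet_derivative (snd p) (at x) v)"
        using Cons.prems by (auto elim: c_inf.cases)
      then show ?case using Cons by auto
    qed
    ultimately show ?case using fd by blast
  qed
qed

lemma cinf_mult: "open U \<Longrightarrow> c_inf U f \<Longrightarrow> c_inf U g \<Longrightarrow> c_inf U (\<lambda>x. f x * g x)"
  by (rule cinf_psum[where ps = "[(f,g)]"]) auto

lemma cinf_const: "open U \<Longrightarrow> c_inf U (\<lambda>x. c)"
proof -
  have "\<exists>c. h = (\<lambda>x. c) \<Longrightarrow> c_inf U h" for h
  proof (coinduction arbitrary: h rule: c_inf.coinduct)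
    case (c_inf h)
    then obtain c where h: "h = (\<lambda>x. c)" by blast
    have "frechet_derivative h (at x) = (\<lambda>v. 0)" for x
      using frechet_derivative_at[OF has_derivative_const[of c "at x"]] h by simp
    then show ?case using h by auto
  qed
  then show "c_inf U (\<lambda>x. c)" by blast
qed

lemma cinf_lin: "open U \<Longrightarrow> c_inf U f \<Longrightarrow> c_inf U g \<Longrightarrow> (\<forall>x\<in>U. h x = a * f x + b * g x) \<Longrightarrow> c_inf U h"
  by (rule cinf_psum[where ps = "[(f,\<lambda>_. a),(g,\<lambda>_. b)]"]) (auto simp: cinf_const algebra_simps)

lemma cinf_cong: "open U \<Longrightarrow> c_inf U f \<Longrightarrow> (\<forall>x\<in>U. h x = f x) \<Longrightarrow> c_inf U h"
  by (rule cinf_psum[where ps = "[(f,\<lambda>_. 1)]"]) (auto simp: cinf_const)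




definition charts_ok :: "'a topology \<Rightarrow> ('a set \<times> ('a \<Rightarrow> 'e::euclidean_space)) set \<Rightarrow> bool" where
  "charts_ok M A \<longleftrightarrow> (\<forall>(U,\<phi>)\<in>A. openin M U \<and> open (\<phi> ` U))"

lemma smooth_manifold_charts_ok: "smooth_manifold M A \<Longrightarrow> charts_ok M A"
  unfolding smooth_manifold_def smooth_atlas_def charts_ok_def by fast

context
  fixes M :: "'a topology" and A :: "('a set \<times> ('a \<Rightarrow> 'e::euclidean_space)) set"
  assumes ok: "charts_ok M A"
begin

lemma sf_psum:
  assumes "\<forall>p\<in>set ps. smooth_fun M A (fst p) \<and> smooth_fun M A (snd p)"
    and "\<forall>x. h x = psum ps x"
  shows "smooth_fun M A h"
  unfolding smooth_fun_def
proof (intro conjI ballI allI impI)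
  fix c assume "c \<in> A"
  then obtain U \<phi> where c: "c = (U,\<phi>)" "(U,\<phi>) \<in> A" by (cases c) auto
  then have U: "open (\<phi> ` U)" using ok unfolding charts_ok_def by auto
  let ?i = "inv_into U \<phi>"
  have "c_inf (\<phi> ` U) (h \<circ> ?i)"
  proof (rule cinf_psum[OF U, where ps = "map (\<lambda>p. (fst p \<circ> ?i, snd p \<circ> ?i)) ps"])
    show "\<forall>p\<in>set (map (\<lambda>p. (fst p \<circ> ?i, snd p \<circ> ?i)) ps). c_inf (\<phi> ` U) (fst p) \<and> c_inf (\<phi> ` U) (snd p)"
      using assms(1) c unfolding smooth_fun_def by fastforce
    have "psum (map (\<lambda>p. (fst p \<circ> ?i, snd p \<circ> ?i)) ps) y = psum ps (?i y)" for y
      by (induction ps) auto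
    then show "\<forall>x\<in>\<phi> ` U. (h \<circ> ?i) x = psum (map (\<lambda>p. (fst p \<circ> ?i, snd p \<circ> ?i)) ps) x"
      using assms(2) by simp
  qed
  then show "case c of (U, \<phi>) \<Rightarrow> c_inf (\<phi> ` U) (h \<circ> inv_into U \<phi>)" using c by simp
next
  fix x assume "x \<notin> topspace M"
  then have "\<forall>p\<in>set ps. fst p x = 0" using assms(1) unfolding smooth_fun_def by auto
  then have "psum ps x = 0" by (induction ps) auto
  then show "h x = 0" using assms(2) by simp
qed

lemma sf_zero[simp]: "smooth_fun M A (\<lambda>x. 0)"
  by (rule sf_psum[where ps = "[]"]) auto

lemma sf_mult[simp]: "smooth_fun M A f \<Longrightarrow> smooth_fun M A g \<Longrightarrow> smooth_fun M A (\<lambda>x. f x * g x)"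
  by (rule sf_psum[where ps = "[(f,g)]"]) auto

lemma sf_ind: "smooth_fun M A (\<lambda>x. if x \<in> topspace M then c else 0)"
    unfolding smooth_fun_def
  proof (intro conjI ballI allI impI)
    fix p assume "p \<in> A"
    then obtain U \<phi> where c: "p = (U,\<phi>)" "(U,\<phi>) \<in> A" by (cases p) auto
    then have U: "open (\<phi> ` U)" and UM: "U \<subseteq> topspace M" using ok unfolding charts_ok_def
      by (fastforce dest: openin_subset)+
    have "c_inf (\<phi> ` U) ((\<lambda>x. if x \<in> topspace M then c else 0) \<circ> inv_into U \<phi>)"
    proof (rule cinf_cong[OF U cinf_const[OF U, of c]], intro ballI)
      fix y assume "y \<in> \<phi> ` U"
      then have "inv_into U \<phi> y \<in> U" by (rule inv_into_into)
      then show "((\<lambda>x. if x \<in> topspace M then c else 0) \<circ> inv_into U \<phi>) y = c" using UM by auto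
    qed
    then show "case p of (U, \<phi>) \<Rightarrow> c_inf (\<phi> ` U) ((\<lambda>x. if x \<in> topspace M then c else 0) \<circ> inv_into U \<phi>)"
      using c by simp
  qed simp

lemma sf_out: "smooth_fun M A f \<Longrightarrow> x \<notin> topspace M \<Longrightarrow> f x = 0"
  unfolding smooth_fun_def by auto


lemma sf_lin: "smooth_fun M A f \<Longrightarrow> smooth_fun M A g \<Longrightarrow> smooth_fun M A (\<lambda>x. a * f x + b * g x)"
proof -
  assume f: "smooth_fun M A f" and g: "smooth_fun M A g"
  define ia where "ia = (\<lambda>x. if x \<in> topspace M then a else 0)"
  define ib where "ib = (\<lambda>x. if x \<in> topspace M then b else 0)"
  have sa: "smooth_fun M A ia" "smooth_fun M A ib" unfolding ia_def ib_def by (rule sf_ind)+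
  have eq: "a * f x + b * g x = psum [(f, ia), (g, ib)] x" for x
  proof (cases "x \<in> topspace M")
    case True then show ?thesis by (simp add: ia_def ib_def mult.commute)
  next
    case False then show ?thesis using sf_out[OF f False] sf_out[OF g False] by (simp add: ia_def ib_def)
  qed
  show ?thesis
    by (rule sf_psum[where ps = "[(f, ia), (g, ib)]"]) (use f g sa eq in auto)
qed

lemma sf_add[simp]: "smooth_fun M A f \<Longrightarrow> smooth_fun M A g \<Longrightarrow> smooth_fun M A (\<lambda>x. f x + g x)"
  using sf_lin[of f g 1 1] by simp
lemma sf_diff[simp]: "smooth_fun M A f \<Longrightarrow> smooth_fun M A g \<Longrightarrow> smooth_fun M A (\<lambda>x. f x - g x)"
  using sf_lin[of f g 1 "-1"] by simp
lemma sf_cmult[simp]: "smooth_fun M A f \<Longrightarrow> smooth_fun M A (\<lambda>x. c * f x)"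
  using sf_lin[of f f c 0] by simp
lemma sf_neg[simp]: "smooth_fun M A f \<Longrightarrow> smooth_fun M A (\<lambda>x. - f x)"
  using sf_lin[of f f "-1" 0] by simp

end



context
  fixes M :: "'a topology" and A :: "('a set \<times> ('a \<Rightarrow> 'e::euclidean_space)) set"
  assumes ok: "charts_ok M A"
begin

lemmas sfs_3[simp] = sf_zero[OF ok] sf_mult[OF ok] sf_add[OF ok] sf_diff[OF ok] sf_cmult[OF ok] sf_neg[OF ok]

lemma vf_smooth[simp]: "vector_field M A X \<Longrightarrow> smooth_fun M A f \<Longrightarrow> smooth_fun M A (X f)"
  unfolding vector_field_def by blast
lemma vf_nonsmooth: "vector_field M A X \<Longrightarrow> \<not> smooth_fun M A f \<Longrightarrow> X f = (\<lambda>_. 0)"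
  unfolding vector_field_def by blast
lemma vf_addf[simp]: "vector_field M A X \<Longrightarrow> smooth_fun M A f \<Longrightarrow> smooth_fun M A g \<Longrightarrow>
   X (\<lambda>x. f x + g x) = (\<lambda>x. X f x + X g x)"
  unfolding vector_field_def by blast
lemma vf_multf[simp]: "vector_field M A X \<Longrightarrow> smooth_fun M A f \<Longrightarrow> smooth_fun M A g \<Longrightarrow>
   X (\<lambda>x. f x * g x) = (\<lambda>x. f x * X g x + g x * X f x)"
  unfolding vector_field_def by blast
lemma vf_cmultf[simp]: "vector_field M A X \<Longrightarrow> smooth_fun M A f \<Longrightarrow> X (\<lambda>x. c * f x) = (\<lambda>x. c * X f x)"
  unfolding vector_field_def by blast
lemma vf_zerof[simp]: "vector_field M A X \<Longrightarrow> X (\<lambda>x. 0) = (\<lambda>x. 0)"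
  using vf_cmultf[of X "\<lambda>x. 0" 0] by simp
lemma vf_negf[simp]: "vector_field M A X \<Longrightarrow> smooth_fun M A f \<Longrightarrow> X (\<lambda>x. - f x) = (\<lambda>x. - X f x)"
  using vf_cmultf[of X f "-1"] by simp
lemma vf_difff[simp]: "vector_field M A X \<Longrightarrow> smooth_fun M A f \<Longrightarrow> smooth_fun M A g \<Longrightarrow>
   X (\<lambda>x. f x - g x) = (\<lambda>x. X f x - X g x)"
proof -
  assume X: "vector_field M A X" and f: "smooth_fun M A f" and g: "smooth_fun M A g"
  have "X (\<lambda>x. f x + (- g x)) = (\<lambda>x. X f x + X (\<lambda>x. - g x) x)"
    using vf_addf[OF X f sf_neg[OF ok g]] .
  then show ?thesis using X g by simp
qed
lemma vf_out: "vector_field M A X \<Longrightarrow> x \<notin> topspace M \<Longrightarrow> X f x = 0"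
  by (cases "smooth_fun M A f") (auto dest: vf_nonsmooth intro: sf_out[OF ok vf_smooth])

lemma vf_zero[simp]: "vector_field M A (\<lambda>f x. 0)"
  unfolding vector_field_def by simp

lemma vf_vadd[simp]: "vector_field M A X \<Longrightarrow> vector_field M A Y \<Longrightarrow> vector_field M A (\<lambda>f x. X f x + Y f x)"
  unfolding vector_field_def[of M A "\<lambda>f x. X f x + Y f x"]
  by (auto simp: vf_nonsmooth algebra_simps)

lemma vf_vsmul[simp]: "smooth_fun M A g \<Longrightarrow> vector_field M A X \<Longrightarrow> vector_field M A (\<lambda>f x. g x * X f x)"
  unfolding vector_field_def[of M A "\<lambda>f x. g x * X f x"]
  by (auto simp: vf_nonsmooth algebra_simps)

lemma vf_vcmul[simp]: "vector_field M A X \<Longrightarrow> vector_field M A (\<lambda>f x. c * X f x)"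
  unfolding vector_field_def[of M A "\<lambda>f x. c * X f x"]
  by (auto simp: vf_nonsmooth algebra_simps)

lemma vf_vneg[simp]: "vector_field M A X \<Longrightarrow> vector_field M A (\<lambda>f x. - X f x)"
  unfolding vector_field_def[of M A "\<lambda>f x. - X f x"]
  by (auto simp: vf_nonsmooth algebra_simps)

lemma vf_vdiff[simp]: "vector_field M A X \<Longrightarrow> vector_field M A Y \<Longrightarrow> vector_field M A (\<lambda>f x. X f x - Y f x)"
  unfolding vector_field_def[of M A "\<lambda>f x. X f x - Y f x"]
  by (auto simp: vf_nonsmooth algebra_simps)

lemma vf_lie[simp]: "vector_field M A X \<Longrightarrow> vector_field M A Y \<Longrightarrow> vector_field M A (lie X Y)"
  proof -
  assume X: "vector_field M A X" and Y: "vector_field M A Y"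
  have prod: "lie X Y (\<lambda>x. f x * g x) = (\<lambda>x. f x * lie X Y g x + g x * lie X Y f x)"
    if f: "smooth_fun M A f" and g: "smooth_fun M A g" for f g
  proof -
    have s: "smooth_fun M A (\<lambda>x. f x * Y g x)" "smooth_fun M A (\<lambda>x. g x * Y f x)"
      "smooth_fun M A (\<lambda>x. f x * X g x)" "smooth_fun M A (\<lambda>x. g x * X f x)"
      using X Y f g by simp_all
    have "X (Y (\<lambda>x. f x * g x)) = (\<lambda>x. X (\<lambda>x. f x * Y g x) x + X (\<lambda>x. g x * Y f x) x)"
      using vf_multf[OF Y f g] vf_addf[OF X s(1,2)] by simp
    also have "\<dots> = (\<lambda>x. f x * X (Y g) x + Y g x * X f x + (g x * X (Y f) x + Y f x * X g x))"
      using X Y f g by simp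
    finally have 1: "X (Y (\<lambda>x. f x * g x)) = \<dots>" .
    have "Y (X (\<lambda>x. f x * g x)) = (\<lambda>x. Y (\<lambda>x. f x * X g x) x + Y (\<lambda>x. g x * X f x) x)"
      using vf_multf[OF X f g] vf_addf[OF Y s(3,4)] by simp
    also have "\<dots> = (\<lambda>x. f x * Y (X g) x + X g x * Y f x + (g x * Y (X f) x + X f x * Y g x))"
      using X Y f g by simp
    finally have 2: "Y (X (\<lambda>x. f x * g x)) = \<dots>" .
    show ?thesis unfolding lie_def 1 2 by (simp add: algebra_simps)
  qed
  show ?thesis
    unfolding vector_field_def[of M A "lie X Y"] using prod X Y
    unfolding lie_def by (auto simp: vf_nonsmooth algebra_simps)
qed

lemma vf_add_vf[simp]: "vector_field M A X \<Longrightarrow> vector_field M A Y \<Longrightarrow> vector_field M A (vf_add X Y)"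
  unfolding vf_add_def by simp
lemma vf_smul_vf[simp]: "smooth_fun M A g \<Longrightarrow> vector_field M A X \<Longrightarrow> vector_field M A (vf_smul g X)"
  unfolding vf_smul_def by simp
lemma vf_rsmul_vf[simp]: "vector_field M A X \<Longrightarrow> vector_field M A (vf_rsmul c X)"
  unfolding vf_rsmul_def by simp

end



context
  fixes M :: "'a topology" and A :: "('a set \<times> ('a \<Rightarrow> 'e::euclidean_space)) set"
  assumes ok: "charts_ok M A"
begin

lemmas sfs_4[simp] = sf_zero[OF ok] sf_mult[OF ok] sf_add[OF ok] sf_diff[OF ok] sf_cmult[OF ok] sf_neg[OF ok]
lemmas vfs_4[simp] = vf_smooth[OF ok] vf_addf[OF ok] vf_multf[OF ok] vf_cmultf[OF ok] vf_zerof[OF ok] vf_negf[OF ok] vf_difff[OF ok]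
  vf_zero[OF ok] vf_vadd[OF ok] vf_vsmul[OF ok] vf_vcmul[OF ok] vf_vneg[OF ok] vf_vdiff[OF ok] vf_lie[OF ok]
  vf_add_vf[OF ok] vf_smul_vf[OF ok] vf_rsmul_vf[OF ok]

lemma of_smooth[simp]: "one_form M A \<eta> \<Longrightarrow> vector_field M A X \<Longrightarrow> smooth_fun M A (\<eta> X)"
  unfolding one_form_def by blast
lemma of_nonvf: "one_form M A \<eta> \<Longrightarrow> \<not> vector_field M A X \<Longrightarrow> \<eta> X = (\<lambda>_. 0)"
  unfolding one_form_def by blast
lemma of_add[simp]: "one_form M A \<eta> \<Longrightarrow> vector_field M A X \<Longrightarrow> vector_field M A Y \<Longrightarrow>
   \<eta> (vf_add X Y) = (\<lambda>x. \<eta> X x + \<eta> Y x)"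
  unfolding one_form_def by blast
lemma of_smul[simp]: "one_form M A \<eta> \<Longrightarrow> smooth_fun M A g \<Longrightarrow> vector_field M A X \<Longrightarrow>
   \<eta> (vf_smul g X) = (\<lambda>x. g x * \<eta> X x)"
  unfolding one_form_def by blast
lemma of_out: assumes "one_form M A \<eta>" "x \<notin> topspace M" shows "\<eta> X x = 0"
proof (cases "vector_field M A X")
  case True
  then have "smooth_fun M A (\<eta> X)" using of_smooth[OF assms(1)] by blast
  then show ?thesis using sf_out[OF ok _ assms(2)] by blast
next
  case False
  then show ?thesis using of_nonvf[OF assms(1) False] by simp
qed

lemma of_zero[simp]: "one_form M A (\<lambda>X x. 0)"
  unfolding one_form_def by simp
lemma of_fadd[simp]: "one_form M A \<eta> \<Longrightarrow> one_form M A \<beta> \<Longrightarrow> one_form M A (\<lambda>X x. \<eta> X x + \<beta> X x)"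
  unfolding one_form_def[of M A "\<lambda>X x. \<eta> X x + \<beta> X x"] by (auto simp: of_nonvf algebra_simps)
lemma of_fdiff[simp]: "one_form M A \<eta> \<Longrightarrow> one_form M A \<beta> \<Longrightarrow> one_form M A (\<lambda>X x. \<eta> X x - \<beta> X x)"
  unfolding one_form_def[of M A "\<lambda>X x. \<eta> X x - \<beta> X x"] by (auto simp: of_nonvf algebra_simps)
lemma of_fsmul[simp]: "smooth_fun M A g \<Longrightarrow> one_form M A \<eta> \<Longrightarrow> one_form M A (\<lambda>X x. g x * \<eta> X x)"
  unfolding one_form_def[of M A "\<lambda>X x. g x * \<eta> X x"] by (auto simp: of_nonvf algebra_simps)
lemma of_fcmul[simp]: "one_form M A \<eta> \<Longrightarrow> one_form M A (\<lambda>X x. c * \<eta> X x)"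
  unfolding one_form_def[of M A "\<lambda>X x. c * \<eta> X x"] by (auto simp: of_nonvf algebra_simps)
lemma of_fneg[simp]: "one_form M A \<eta> \<Longrightarrow> one_form M A (\<lambda>X x. - \<eta> X x)"
  unfolding one_form_def[of M A "\<lambda>X x. - \<eta> X x"] by (auto simp: of_nonvf algebra_simps)

end

context
  fixes M :: "'a topology" and A :: "('a set \<times> ('a \<Rightarrow> 'e::euclidean_space)) set"
    and nabla :: "'a vf \<Rightarrow> 'a vf \<Rightarrow> 'a vf"
  assumes ok: "charts_ok M A" and ac: "affine_connection M A nabla"
begin

lemma ac_vf[simp]: "vector_field M A X \<Longrightarrow> vector_field M A Y \<Longrightarrow> vector_field M A (nabla X Y)"
  using ac[unfolded affine_connection_def, THEN conjunct1] by blast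
lemma ac_non: "\<not> (vector_field M A X \<and> vector_field M A Y) \<Longrightarrow> nabla X Y = (\<lambda>f x. 0)"
  using ac[unfolded affine_connection_def, THEN conjunct2, THEN conjunct1] by blast
lemma ac_add1[simp]: "vector_field M A X \<Longrightarrow> vector_field M A X' \<Longrightarrow> vector_field M A Y \<Longrightarrow>
  nabla (vf_add X X') Y = vf_add (nabla X Y) (nabla X' Y)"
  using ac[unfolded affine_connection_def, THEN conjunct2, THEN conjunct2, THEN conjunct1] by blast
lemma ac_add2[simp]: "vector_field M A X \<Longrightarrow> vector_field M A X' \<Longrightarrow> vector_field M A Y \<Longrightarrow>
  nabla Y (vf_add X X') = vf_add (nabla Y X) (nabla Y X')"
  using ac[unfolded affine_connection_def, THEN conjunct2, THEN conjunct2, THEN conjunct1] by blast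
lemma ac_smul1[simp]: "smooth_fun M A g \<Longrightarrow> vector_field M A X \<Longrightarrow> vector_field M A Y \<Longrightarrow>
  nabla (vf_smul g X) Y = vf_smul g (nabla X Y)"
  using ac[unfolded affine_connection_def, THEN conjunct2, THEN conjunct2, THEN conjunct2, THEN conjunct2] by blast
lemma ac_smul2[simp]: "smooth_fun M A g \<Longrightarrow> vector_field M A X \<Longrightarrow> vector_field M A Y \<Longrightarrow>
  nabla X (vf_smul g Y) = vf_add (vf_smul (X g) Y) (vf_smul g (nabla X Y))"
  using ac[unfolded affine_connection_def, THEN conjunct2, THEN conjunct2, THEN conjunct2, THEN conjunct2] by blast

lemmas sfs_4'[simp] = sf_zero[OF ok] sf_mult[OF ok] sf_add[OF ok] sf_diff[OF ok] sf_cmult[OF ok] sf_neg[OF ok]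
lemmas vfs_4'[simp] = vf_smooth[OF ok] vf_addf[OF ok] vf_multf[OF ok] vf_cmultf[OF ok] vf_zerof[OF ok] vf_negf[OF ok] vf_difff[OF ok]
  vf_zero[OF ok] vf_vadd[OF ok] vf_vsmul[OF ok] vf_vcmul[OF ok] vf_vneg[OF ok] vf_vdiff[OF ok] vf_lie[OF ok]
  vf_add_vf[OF ok] vf_smul_vf[OF ok] vf_rsmul_vf[OF ok]
lemmas ofs_4'[simp] = of_smooth[OF ok] of_add[OF ok] of_smul[OF ok] of_zero[OF ok] of_fadd[OF ok] of_fdiff[OF ok] of_fsmul[OF ok] of_fcmul[OF ok] of_fneg[OF ok]

lemma of_nabla[simp]:
  assumes X: "vector_field M A X" and e: "one_form M A \<eta>"
  shows "one_form M A (nabla_form M A nabla X \<eta>)"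
proof -
  have 1: "smooth_fun M A (nabla_form M A nabla X \<eta> Y)" if Y: "vector_field M A Y" for Y
  proof -
    have "nabla_form M A nabla X \<eta> Y = (\<lambda>x. X (\<eta> Y) x - \<eta> (nabla X Y) x)"
      using Y by (simp add: nabla_form_def)
    then show ?thesis using sf_diff[OF ok vf_smooth[OF ok X of_smooth[OF ok e Y]] of_smooth[OF ok e ac_vf[OF X Y]]] by simp
  qed
  have 2: "nabla_form M A nabla X \<eta> (vf_add Y Y') = (\<lambda>x. nabla_form M A nabla X \<eta> Y x + nabla_form M A nabla X \<eta> Y' x)"
    if Y: "vector_field M A Y" and Y': "vector_field M A Y'" for Y Y'
    using X Y Y' e by (simp add: nabla_form_def algebra_simps)
  have 3: "nabla_form M A nabla X \<eta> (vf_smul g Y) = (\<lambda>x. g x * nabla_form M A nabla X \<eta> Y x)"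
    if g: "smooth_fun M A g" and Y: "vector_field M A Y" for g Y
  proof -
    have a: "\<eta> (vf_smul g Y) = (\<lambda>x. g x * \<eta> Y x)" using e g Y by simp
    have b: "X (\<lambda>x. g x * \<eta> Y x) = (\<lambda>x. g x * X (\<eta> Y) x + \<eta> Y x * X g x)" using e g Y X by simp
    have c: "\<eta> (nabla X (vf_smul g Y)) = (\<lambda>x. X g x * \<eta> Y x + g x * \<eta> (nabla X Y) x)"
      using e g Y X by simp
    show ?thesis using g Y unfolding nabla_form_def a b c by (simp add: algebra_simps)
  qed
  show ?thesis unfolding one_form_def using 1 2 3 by (auto simp: nabla_form_def)
qed

end



context
  fixes M :: "'a topology" and A :: "('a set \<times> ('a \<Rightarrow> 'e::euclidean_space)) set"
    and nabla :: "'a vf \<Rightarrow> 'a vf \<Rightarrow> 'a vf"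
  assumes ok: "charts_ok M A" and ac: "affine_connection M A nabla"
begin

lemmas sfs_5[simp] = sf_zero[OF ok] sf_mult[OF ok] sf_add[OF ok] sf_diff[OF ok] sf_cmult[OF ok] sf_neg[OF ok]
lemmas vfs_5[simp] = vf_smooth[OF ok] vf_addf[OF ok] vf_multf[OF ok] vf_cmultf[OF ok] vf_zerof[OF ok] vf_negf[OF ok] vf_difff[OF ok]
  vf_zero[OF ok] vf_vadd[OF ok] vf_vsmul[OF ok] vf_vcmul[OF ok] vf_vneg[OF ok] vf_vdiff[OF ok] vf_lie[OF ok]
  vf_add_vf[OF ok] vf_smul_vf[OF ok] vf_rsmul_vf[OF ok]
lemmas ofs_5[simp] = of_smooth[OF ok] of_zero[OF ok] of_fadd[OF ok] of_fdiff[OF ok] of_fsmul[OF ok] of_fcmul[OF ok] of_fneg[OF ok]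
  of_nabla[OF ok ac]
lemmas acs[simp] = ac_vf[OF ok ac]

lemma of_add'[simp]: "one_form M A \<eta> \<Longrightarrow> vector_field M A X \<Longrightarrow> vector_field M A Y \<Longrightarrow>
   \<eta> (\<lambda>f x. X f x + Y f x) = (\<lambda>x. \<eta> X x + \<eta> Y x)"
  using of_add[OF ok] unfolding vf_add_def by blast
lemma of_smul'[simp]: "one_form M A \<eta> \<Longrightarrow> smooth_fun M A g \<Longrightarrow> vector_field M A X \<Longrightarrow>
   \<eta> (\<lambda>f x. g x * X f x) = (\<lambda>x. g x * \<eta> X x)"
  using of_smul[OF ok] unfolding vf_smul_def by blast
lemma ac_add1'[simp]: "vector_field M A X \<Longrightarrow> vector_field M A X' \<Longrightarrow> vector_field M A Y \<Longrightarrow>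
  nabla (\<lambda>f x. X f x + X' f x) Y = (\<lambda>f x. nabla X Y f x + nabla X' Y f x)"
  using ac_add1[OF ok ac] unfolding vf_add_def by blast
lemma ac_add2'[simp]: "vector_field M A X \<Longrightarrow> vector_field M A X' \<Longrightarrow> vector_field M A Y \<Longrightarrow>
  nabla Y (\<lambda>f x. X f x + X' f x) = (\<lambda>f x. nabla Y X f x + nabla Y X' f x)"
  using ac_add2[OF ok ac] unfolding vf_add_def by blast
lemma ac_smul1'[simp]: "smooth_fun M A g \<Longrightarrow> vector_field M A X \<Longrightarrow> vector_field M A Y \<Longrightarrow>
  nabla (\<lambda>f x. g x * X f x) Y = (\<lambda>f x. g x * nabla X Y f x)"
  using ac_smul1[OF ok ac] unfolding vf_smul_def by blast
lemma ac_smul2'[simp]: "smooth_fun M A g \<Longrightarrow> vector_field M A X \<Longrightarrow> vector_field M A Y \<Longrightarrow>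
  nabla X (\<lambda>f x. g x * Y f x) = (\<lambda>f x. X g x * Y f x + g x * nabla X Y f x)"
  using ac_smul2[OF ok ac] unfolding vf_smul_def vf_add_def by blast

lemma vf_app_add: "vector_field M A Y \<Longrightarrow> vector_field M A X \<Longrightarrow> vector_field M A X' \<Longrightarrow>
  Y (\<lambda>x. X f x + X' f x) = (\<lambda>x. Y (X f) x + Y (X' f) x)"
  by (cases "smooth_fun M A f") (simp_all add: vf_nonsmooth[OF ok])


lemma sec_eq_iff: "(\<sigma>::'a gsec) = \<tau> \<longleftrightarrow> (\<forall>f x. fst \<sigma> f x = fst \<tau> f x) \<and> (\<forall>X x. snd \<sigma> X x = snd \<tau> X x)"
  by (auto simp: prod_eq_iff fun_eq_iff)

lemma gs_szero[simp]: "gsection M A szero"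
  unfolding gsection_def szero_def by simp
lemma gs_sadd[simp]: "gsection M A \<sigma> \<Longrightarrow> gsection M A \<tau> \<Longrightarrow> gsection M A (sadd \<sigma> \<tau>)"
  unfolding gsection_def sadd_def by simp
lemma gs_ssub[simp]: "gsection M A \<sigma> \<Longrightarrow> gsection M A \<tau> \<Longrightarrow> gsection M A (ssub \<sigma> \<tau>)"
  unfolding gsection_def ssub_def by simp
lemma gs_sneg[simp]: "gsection M A \<sigma> \<Longrightarrow> gsection M A (sneg \<sigma>)"
  unfolding gsection_def sneg_def by simp
lemma gs_ssmul[simp]: "smooth_fun M A g \<Longrightarrow> gsection M A \<sigma> \<Longrightarrow> gsection M A (ssmul g \<sigma>)"
  unfolding gsection_def ssmul_def by simp
lemma gs_srsmul[simp]: "gsection M A \<sigma> \<Longrightarrow> gsection M A (srsmul c \<sigma>)"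
  unfolding gsection_def srsmul_def by simp
lemma gs_bracket[simp]: "gsection M A \<sigma> \<Longrightarrow> gsection M A \<tau> \<Longrightarrow> gsection M A (nabla_bracket M A nabla \<sigma> \<tau>)"
  unfolding gsection_def nabla_bracket_def by simp

lemma sec_out: "gsection M A \<sigma> \<Longrightarrow> x \<notin> topspace M \<Longrightarrow> fst \<sigma> f x = 0 \<and> snd \<sigma> X x = 0"
  unfolding gsection_def using vf_out[OF ok] of_out[OF ok] by blast

lemma ssmul_ind: "gsection M A \<sigma> \<Longrightarrow> ssmul (\<lambda>x. if x \<in> topspace M then c else 0) \<sigma> = srsmul c \<sigma>"
  unfolding sec_eq_iff ssmul_def srsmul_def using sec_out by auto

lemma br_antisym: "nabla_bracket M A nabla \<sigma> \<tau> = sneg (nabla_bracket M A nabla \<tau> \<sigma>)"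
  unfolding sec_eq_iff nabla_bracket_def sneg_def lie_def by simp

lemma br_add1:
  assumes s: "gsection M A \<sigma>" and s': "gsection M A \<sigma>'" and t: "gsection M A \<tau>"
  shows "nabla_bracket M A nabla (sadd \<sigma> \<sigma>') \<tau> = sadd (nabla_bracket M A nabla \<sigma> \<tau>) (nabla_bracket M A nabla \<sigma>' \<tau>)"
proof -
  obtain X \<eta> where 1: "\<sigma> = (X,\<eta>)" "vector_field M A X" "one_form M A \<eta>" using s unfolding gsection_def by (cases \<sigma>) auto
  obtain X' \<eta>' where 2: "\<sigma>' = (X',\<eta>')" "vector_field M A X'" "one_form M A \<eta>'" using s' unfolding gsection_def by (cases \<sigma>') auto
  obtain Y \<beta> where 3: "\<tau> = (Y,\<beta>)" "vector_field M A Y" "one_form M A \<beta>" using t unfolding gsection_def by (cases \<tau>) auto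
  show ?thesis using 1(2,3) 2(2,3) 3(2,3) unfolding 1(1) 2(1) 3(1)
    by (auto simp: sec_eq_iff nabla_bracket_def sadd_def lie_def nabla_form_def vf_app_add algebra_simps)
qed

lemma vf_app_smul: "vector_field M A Y \<Longrightarrow> vector_field M A X \<Longrightarrow> smooth_fun M A g \<Longrightarrow>
  Y (\<lambda>x. g x * X f x) = (\<lambda>x. g x * Y (X f) x + X f x * Y g x)"
  by (cases "smooth_fun M A f") (simp_all add: vf_nonsmooth[OF ok])

lemma br_smul1:
  assumes g: "smooth_fun M A g" and s: "gsection M A \<sigma>" and t: "gsection M A \<tau>"
  shows "nabla_bracket M A nabla (ssmul g \<sigma>) \<tau> = ssub (ssmul g (nabla_bracket M A nabla \<sigma> \<tau>)) (ssmul (fst \<tau> g) \<sigma>)"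
proof -
  obtain X \<eta> where 1: "\<sigma> = (X,\<eta>)" "vector_field M A X" "one_form M A \<eta>" using s unfolding gsection_def by (cases \<sigma>) auto
  obtain Y \<beta> where 3: "\<tau> = (Y,\<beta>)" "vector_field M A Y" "one_form M A \<beta>" using t unfolding gsection_def by (cases \<tau>) auto
  have nv: "\<eta> Z = (\<lambda>x. 0)" if "\<not> vector_field M A Z" for Z using of_nonvf[OF ok 1(3) that] .
  show ?thesis using 1(2,3) 3(2,3) g nv unfolding 1(1) 3(1)
    by (auto simp: sec_eq_iff nabla_bracket_def ssub_def ssmul_def lie_def nabla_form_def vf_app_smul algebra_simps)
qed

lemma vf_ind: assumes Y: "vector_field M A Y" shows "Y (\<lambda>x. if x \<in> topspace M then c else 0) = (\<lambda>x. 0)"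
proof -
  let ?i = "\<lambda>x. if x \<in> topspace M then 1 else (0::real)"
  have si: "smooth_fun M A ?i" by (rule sf_ind[OF ok])
  have "?i = (\<lambda>x. ?i x * ?i x)" by auto
  then have "Y ?i = Y (\<lambda>x. ?i x * ?i x)" by simp
  also have "\<dots> = (\<lambda>x. ?i x * Y ?i x + ?i x * Y ?i x)" by (rule vf_multf[OF ok Y si si])
  finally have E: "Y ?i = (\<lambda>x. ?i x * Y ?i x + ?i x * Y ?i x)" .
  have e: "Y ?i x = ?i x * Y ?i x + ?i x * Y ?i x" for x by (rule fun_cong[OF E])
  have z: "Y ?i x = 0" for x
  proof (cases "x \<in> topspace M")
    case True then show ?thesis using e[of x] by simp
  next
    case False then show ?thesis using vf_out[OF ok Y False] by simp
  qed
  have "(\<lambda>x. if x \<in> topspace M then c else 0) = (\<lambda>x. c * ?i x)" by auto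
  then have "Y (\<lambda>x. if x \<in> topspace M then c else 0) = Y (\<lambda>x. c * ?i x)" by simp
  also have "\<dots> = (\<lambda>x. c * Y ?i x)" by (rule vf_cmultf[OF ok Y si])
  finally show ?thesis using z by simp
qed

lemma br_rsmul1:
  assumes s: "gsection M A \<sigma>" and t: "gsection M A \<tau>"
  shows "nabla_bracket M A nabla (srsmul c \<sigma>) \<tau> = srsmul c (nabla_bracket M A nabla \<sigma> \<tau>)"
proof -
  let ?g = "\<lambda>x. if x \<in> topspace M then c else 0"
  have tg: "fst \<tau> ?g = (\<lambda>x. 0)" using vf_ind t unfolding gsection_def by blast
  have "nabla_bracket M A nabla (srsmul c \<sigma>) \<tau> = nabla_bracket M A nabla (ssmul ?g \<sigma>) \<tau>"
    using ssmul_ind[OF s] by simp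
  also have "\<dots> = ssub (ssmul ?g (nabla_bracket M A nabla \<sigma> \<tau>)) (ssmul (fst \<tau> ?g) \<sigma>)"
    by (rule br_smul1[OF sf_ind[OF ok] s t])
  also have "\<dots> = srsmul c (nabla_bracket M A nabla \<sigma> \<tau>)"
    unfolding tg ssmul_ind[OF gs_bracket[OF s t]] by (simp add: sec_eq_iff ssub_def ssmul_def srsmul_def)
  finally show ?thesis .
qed


lemma br_add2:
  assumes s: "gsection M A \<sigma>" and s': "gsection M A \<sigma>'" and t: "gsection M A \<tau>"
  shows "nabla_bracket M A nabla \<tau> (sadd \<sigma> \<sigma>') = sadd (nabla_bracket M A nabla \<tau> \<sigma>) (nabla_bracket M A nabla \<tau> \<sigma>')"
  using br_add1[OF s s' t] br_antisym[of \<tau> "sadd \<sigma> \<sigma>'"] br_antisym[of \<tau> \<sigma>] br_antisym[of \<tau> \<sigma>']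
  by (simp add: sec_eq_iff sadd_def sneg_def)

lemma br_rsmul2:
  assumes s: "gsection M A \<sigma>" and t: "gsection M A \<tau>"
  shows "nabla_bracket M A nabla \<tau> (srsmul c \<sigma>) = srsmul c (nabla_bracket M A nabla \<tau> \<sigma>)"
  using br_rsmul1[OF s t, of c] br_antisym[of \<tau> "srsmul c \<sigma>"] br_antisym[of \<tau> \<sigma>]
  by (simp add: sec_eq_iff srsmul_def sneg_def)

lemma br_smul2:
  assumes g: "smooth_fun M A g" and s: "gsection M A \<sigma>" and t: "gsection M A \<tau>"
  shows "nabla_bracket M A nabla \<tau> (ssmul g \<sigma>) = sadd (ssmul g (nabla_bracket M A nabla \<tau> \<sigma>)) (ssmul (fst \<tau> g) \<sigma>)"
  using br_smul1[OF g s t] br_antisym[of \<tau> "ssmul g \<sigma>"] br_antisym[of \<tau> \<sigma>]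
  by (simp add: sec_eq_iff sadd_def ssub_def ssmul_def sneg_def)

end



definition lin_on :: "('a gsec \<Rightarrow> bool) \<Rightarrow> ('a gsec \<Rightarrow> 'a gsec) \<Rightarrow> bool" where
  "lin_on S L \<longleftrightarrow> (\<forall>\<sigma>. S \<sigma> \<longrightarrow> S (L \<sigma>)) \<and>
     (\<forall>\<sigma> \<tau>. S \<sigma> \<longrightarrow> S \<tau> \<longrightarrow> L (sadd \<sigma> \<tau>) = sadd (L \<sigma>) (L \<tau>)) \<and>
     (\<forall>c \<sigma>. S \<sigma> \<longrightarrow> L (srsmul c \<sigma>) = srsmul c (L \<sigma>))"

lemma sneg_rs: "sneg \<sigma> = srsmul (-1) \<sigma>" by (simp add: sneg_def srsmul_def)
lemma ssub_rs: "ssub \<sigma> \<tau> = sadd \<sigma> (srsmul (-1) \<tau>)" by (simp add: ssub_def sadd_def srsmul_def)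
lemma szero_rs: "szero = srsmul 0 \<sigma>" by (simp add: szero_def srsmul_def)

lemmas secops = sadd_def ssub_def sneg_def srsmul_def ssmul_def szero_def

context
  fixes M :: "'a topology" and A :: "('a set \<times> ('a \<Rightarrow> 'e::euclidean_space)) set"
    and nabla :: "'a vf \<Rightarrow> 'a vf \<Rightarrow> 'a vf"
  assumes ok: "charts_ok M A" and ac: "affine_connection M A nabla"
begin

lemmas gss_6[simp] = gs_szero[OF ok ac] gs_sadd[OF ok ac] gs_ssub[OF ok ac] gs_sneg[OF ok ac] gs_ssmul[OF ok ac]
  gs_srsmul[OF ok ac] gs_bracket[OF ok ac]

lemma lin_gs[simp]: "lin_on (gsection M A) L \<Longrightarrow> gsection M A \<sigma> \<Longrightarrow> gsection M A (L \<sigma>)"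
  unfolding lin_on_def by blast
lemma lin_add: "lin_on (gsection M A) L \<Longrightarrow> gsection M A \<sigma> \<Longrightarrow> gsection M A \<tau> \<Longrightarrow> L (sadd \<sigma> \<tau>) = sadd (L \<sigma>) (L \<tau>)"
  unfolding lin_on_def by blast
lemma lin_rsmul: "lin_on (gsection M A) L \<Longrightarrow> gsection M A \<sigma> \<Longrightarrow> L (srsmul c \<sigma>) = srsmul c (L \<sigma>)"
  unfolding lin_on_def by blast
lemma lin_sneg: "lin_on (gsection M A) L \<Longrightarrow> gsection M A \<sigma> \<Longrightarrow> L (sneg \<sigma>) = sneg (L \<sigma>)"
  unfolding sneg_rs by (rule lin_rsmul)
lemma lin_ssub: "lin_on (gsection M A) L \<Longrightarrow> gsection M A \<sigma> \<Longrightarrow> gsection M A \<tau> \<Longrightarrow> L (ssub \<sigma> \<tau>) = ssub (L \<sigma>) (L \<tau>)"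
  unfolding ssub_rs by (simp add: lin_add lin_rsmul)
lemma lin_zero: "lin_on (gsection M A) L \<Longrightarrow> L szero = szero"
proof -
  assume L: "lin_on (gsection M A) L"
  have "L szero = L (srsmul 0 szero)" by (simp add: srsmul_def szero_def)
  also have "\<dots> = srsmul 0 (L szero)" by (rule lin_rsmul[OF L]) simp
  also have "\<dots> = szero" by (simp add: srsmul_def szero_def)
  finally show ?thesis .
qed

lemma lin_id: "lin_on (gsection M A) (\<lambda>\<sigma>. \<sigma>)"
  unfolding lin_on_def by simp
lemma lin_comp: "lin_on (gsection M A) L1 \<Longrightarrow> lin_on (gsection M A) L2 \<Longrightarrow> lin_on (gsection M A) (\<lambda>\<sigma>. L1 (L2 \<sigma>))"
  unfolding lin_on_def by (simp del: split_paired_All)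
lemma lin_sum: assumes l1: "lin_on (gsection M A) L1" and l2: "lin_on (gsection M A) L2"
  shows "lin_on (gsection M A) (\<lambda>\<sigma>. sadd (L1 \<sigma>) (L2 \<sigma>))"
  unfolding lin_on_def
proof (intro conjI allI impI)
  fix \<sigma> \<tau> assume s: "gsection M A \<sigma>" and t: "gsection M A \<tau>"
  show "sadd (L1 (sadd \<sigma> \<tau>)) (L2 (sadd \<sigma> \<tau>)) = sadd (sadd (L1 \<sigma>) (L2 \<sigma>)) (sadd (L1 \<tau>) (L2 \<tau>))"
    unfolding lin_add[OF l1 s t] lin_add[OF l2 s t] by (simp add: sec_eq_iff secops algebra_simps)
next
  fix c \<sigma> assume s: "gsection M A \<sigma>"
  show "sadd (L1 (srsmul c \<sigma>)) (L2 (srsmul c \<sigma>)) = srsmul c (sadd (L1 \<sigma>) (L2 \<sigma>))"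
    unfolding lin_rsmul[OF l1 s] lin_rsmul[OF l2 s] by (simp add: sec_eq_iff secops algebra_simps)
qed (use l1 l2 in simp)

lemma lin_diff: assumes l1: "lin_on (gsection M A) L1" and l2: "lin_on (gsection M A) L2"
  shows "lin_on (gsection M A) (\<lambda>\<sigma>. ssub (L1 \<sigma>) (L2 \<sigma>))"
  unfolding lin_on_def
proof (intro conjI allI impI)
  fix \<sigma> \<tau> assume s: "gsection M A \<sigma>" and t: "gsection M A \<tau>"
  show "ssub (L1 (sadd \<sigma> \<tau>)) (L2 (sadd \<sigma> \<tau>)) = sadd (ssub (L1 \<sigma>) (L2 \<sigma>)) (ssub (L1 \<tau>) (L2 \<tau>))"
    unfolding lin_add[OF l1 s t] lin_add[OF l2 s t] by (simp add: sec_eq_iff secops algebra_simps)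
next
  fix c \<sigma> assume s: "gsection M A \<sigma>"
  show "ssub (L1 (srsmul c \<sigma>)) (L2 (srsmul c \<sigma>)) = srsmul c (ssub (L1 \<sigma>) (L2 \<sigma>))"
    unfolding lin_rsmul[OF l1 s] lin_rsmul[OF l2 s] by (simp add: sec_eq_iff secops algebra_simps)
qed (use l1 l2 in simp)

lemma lin_sc: assumes l1: "lin_on (gsection M A) L1"
  shows "lin_on (gsection M A) (\<lambda>\<sigma>. srsmul c (L1 \<sigma>))"
  unfolding lin_on_def
proof (intro conjI allI impI)
  fix \<sigma> \<tau> assume s: "gsection M A \<sigma>" and t: "gsection M A \<tau>"
  show "srsmul c (L1 (sadd \<sigma> \<tau>)) = sadd (srsmul c (L1 \<sigma>)) (srsmul c (L1 \<tau>))"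
    unfolding lin_add[OF l1 s t] by (simp add: sec_eq_iff secops algebra_simps)
next
  fix d \<sigma> assume s: "gsection M A \<sigma>"
  show "srsmul c (L1 (srsmul d \<sigma>)) = srsmul d (srsmul c (L1 \<sigma>))"
    unfolding lin_rsmul[OF l1 s] by (simp add: sec_eq_iff secops algebra_simps)
qed (use l1 in simp)

lemma lin_be: assumes K: "bundle_endo M A K" shows "lin_on (gsection M A) K"
proof -
  have gs: "gsection M A \<sigma> \<Longrightarrow> gsection M A (K \<sigma>)" for \<sigma> using K unfolding bundle_endo_def by blast
  have ad: "gsection M A \<sigma> \<Longrightarrow> gsection M A \<tau> \<Longrightarrow> K (sadd \<sigma> \<tau>) = sadd (K \<sigma>) (K \<tau>)" for \<sigma> \<tau>
    using K unfolding bundle_endo_def by blast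
  have sm: "smooth_fun M A g \<Longrightarrow> gsection M A \<sigma> \<Longrightarrow> K (ssmul g \<sigma>) = ssmul g (K \<sigma>)" for g \<sigma>
    using K unfolding bundle_endo_def by blast
  have rs: "K (srsmul c \<sigma>) = srsmul c (K \<sigma>)" if s: "gsection M A \<sigma>" for c \<sigma>
    using sm[OF sf_ind[OF ok] s, of c] ssmul_ind[OF ok ac s] ssmul_ind[OF ok ac gs[OF s]] by simp
  show ?thesis unfolding lin_on_def using gs ad rs by blast
qed

lemma lin_brl: "gsection M A \<sigma> \<Longrightarrow> lin_on (gsection M A) (\<lambda>\<tau>. nabla_bracket M A nabla \<sigma> \<tau>)"
  unfolding lin_on_def using br_add2[OF ok ac] br_rsmul2[OF ok ac] by simp
lemma lin_brr: "gsection M A \<tau> \<Longrightarrow> lin_on (gsection M A) (\<lambda>\<sigma>. nabla_bracket M A nabla \<sigma> \<tau>)"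
  unfolding lin_on_def using br_add1[OF ok ac] br_rsmul1[OF ok ac] by simp

end



definition pp :: "('a gsec \<Rightarrow> 'a gsec) \<Rightarrow> 'a gsec \<Rightarrow> 'a gsec" where
  "pp J \<sigma> = srsmul (1/2) (sadd \<sigma> (J \<sigma>))"
definition pm :: "('a gsec \<Rightarrow> 'a gsec) \<Rightarrow> 'a gsec \<Rightarrow> 'a gsec" where
  "pm J \<sigma> = srsmul (1/2) (ssub \<sigma> (J \<sigma>))"

lemma pp_pm_sum: "sadd (pp J \<sigma>) (pm J \<sigma>) = \<sigma>"
  by (simp add: pp_def pm_def sec_eq_iff secops algebra_simps)

context
  fixes M :: "'a topology" and A :: "('a set \<times> ('a \<Rightarrow> 'e::euclidean_space)) set"
    and nabla :: "'a vf \<Rightarrow> 'a vf \<Rightarrow> 'a vf" and J1 J2 :: "'a gsec \<Rightarrow> 'a gsec"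
  assumes ok: "charts_ok M A" and ac: "affine_connection M A nabla"
    and j1: "gen_almost_product M A J1" and j2: "gen_almost_product M A J2"
    and anti: "\<forall>\<sigma>. gsection M A \<sigma> \<longrightarrow> J1 (J2 \<sigma>) = sneg (J2 (J1 \<sigma>))"
begin

lemmas gss_7[simp] = gs_szero[OF ok ac] gs_sadd[OF ok ac] gs_ssub[OF ok ac] gs_sneg[OF ok ac] gs_ssmul[OF ok ac]
  gs_srsmul[OF ok ac] gs_bracket[OF ok ac]

lemma l1: "lin_on (gsection M A) J1" using lin_be[OF ok ac] j1 unfolding gen_almost_product_def by blast
lemma l2: "lin_on (gsection M A) J2" using lin_be[OF ok ac] j2 unfolding gen_almost_product_def by blast
lemma sq1: "gsection M A \<sigma> \<Longrightarrow> J1 (J1 \<sigma>) = \<sigma>" using j1 unfolding gen_almost_product_def by blast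
lemma sq2: "gsection M A \<sigma> \<Longrightarrow> J2 (J2 \<sigma>) = \<sigma>" using j2 unfolding gen_almost_product_def by blast
lemma com1: "smooth_fun M A g \<Longrightarrow> gsection M A \<sigma> \<Longrightarrow> J1 (ssmul g \<sigma>) = ssmul g (J1 \<sigma>)"
  using j1 unfolding gen_almost_product_def bundle_endo_def by blast
lemma com2: "smooth_fun M A g \<Longrightarrow> gsection M A \<sigma> \<Longrightarrow> J2 (ssmul g \<sigma>) = ssmul g (J2 \<sigma>)"
  using j2 unfolding gen_almost_product_def bundle_endo_def by blast
lemma anti': "gsection M A \<sigma> \<Longrightarrow> J1 (J2 \<sigma>) = sneg (J2 (J1 \<sigma>))" using anti by blast

lemma J1_gs[simp]: "gsection M A \<sigma> \<Longrightarrow> gsection M A (J1 \<sigma>)" using l1 lin_gs[OF ok ac] by blast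
lemma J2_gs[simp]: "gsection M A \<sigma> \<Longrightarrow> gsection M A (J2 \<sigma>)" using l2 lin_gs[OF ok ac] by blast

lemma lin_pp: "lin_on (gsection M A) (pp J1)"
proof -
  have "lin_on (gsection M A) (\<lambda>\<sigma>. srsmul (1/2) (sadd \<sigma> (J1 \<sigma>)))"
    by (intro lin_sc[OF ok ac] lin_sum[OF ok ac] lin_id[OF ok ac] l1)
  then show ?thesis unfolding pp_def[abs_def] .
qed
lemma lin_pm: "lin_on (gsection M A) (pm J1)"
proof -
  have "lin_on (gsection M A) (\<lambda>\<sigma>. srsmul (1/2) (ssub \<sigma> (J1 \<sigma>)))"
    by (intro lin_sc[OF ok ac] lin_diff[OF ok ac] lin_id[OF ok ac] l1)
  then show ?thesis unfolding pm_def[abs_def] .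
qed
lemma pp_gs[simp]: "gsection M A \<sigma> \<Longrightarrow> gsection M A (pp J1 \<sigma>)" by (simp add: pp_def)
lemma pm_gs[simp]: "gsection M A \<sigma> \<Longrightarrow> gsection M A (pm J1 \<sigma>)" by (simp add: pm_def)

definition "V1 x \<longleftrightarrow> gsection M A x \<and> J1 x = x"
definition "V2 x \<longleftrightarrow> gsection M A x \<and> J1 x = sneg x"

lemma V1_pp: assumes s: "gsection M A \<sigma>" shows "V1 (pp J1 \<sigma>)"
proof -
  have "J1 (pp J1 \<sigma>) = srsmul (1/2) (sadd (J1 \<sigma>) (J1 (J1 \<sigma>)))"
    unfolding pp_def lin_rsmul[OF ok ac l1 gs_sadd[OF ok ac s J1_gs[OF s]]] lin_add[OF ok ac l1 s J1_gs[OF s]] ..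
  also have "\<dots> = pp J1 \<sigma>" unfolding sq1[OF s] pp_def by (simp add: sec_eq_iff secops algebra_simps)
  finally show ?thesis unfolding V1_def using s by simp
qed
lemma V2_pm: assumes s: "gsection M A \<sigma>" shows "V2 (pm J1 \<sigma>)"
proof -
  have "J1 (pm J1 \<sigma>) = srsmul (1/2) (ssub (J1 \<sigma>) (J1 (J1 \<sigma>)))"
    unfolding pm_def lin_rsmul[OF ok ac l1 gs_ssub[OF ok ac s J1_gs[OF s]]] lin_ssub[OF ok ac l1 s J1_gs[OF s]] ..
  also have "\<dots> = sneg (pm J1 \<sigma>)" unfolding sq1[OF s] pm_def by (simp add: sec_eq_iff secops algebra_simps)
  finally show ?thesis unfolding V2_def using s by simp
qed

lemma V1_pp_id: "V1 x \<Longrightarrow> pp J1 x = x" unfolding V1_def pp_def by (simp add: sec_eq_iff secops)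
lemma V1_pm_0: "V1 x \<Longrightarrow> pm J1 x = szero" unfolding V1_def pm_def by (simp add: sec_eq_iff secops)
lemma V2_pm_id: "V2 x \<Longrightarrow> pm J1 x = x" unfolding V2_def pm_def by (simp add: sec_eq_iff secops)
lemma V2_pp_0: "V2 x \<Longrightarrow> pp J1 x = szero" unfolding V2_def pp_def by (simp add: sec_eq_iff secops)
lemma V1_gs: "V1 x \<Longrightarrow> gsection M A x" unfolding V1_def by simp
lemma V2_gs: "V2 x \<Longrightarrow> gsection M A x" unfolding V2_def by simp
lemma V1_J1: "V1 x \<Longrightarrow> J1 x = x" unfolding V1_def by simp
lemma V2_J1: "V2 x \<Longrightarrow> J1 x = sneg x" unfolding V2_def by simp
lemma V1_I: "gsection M A x \<Longrightarrow> J1 x = x \<Longrightarrow> V1 x" unfolding V1_def by simp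
lemma V2_I: "gsection M A x \<Longrightarrow> J1 x = sneg x \<Longrightarrow> V2 x" unfolding V2_def by simp

lemma V1_J2: assumes "V1 x" shows "V2 (J2 x)"
  using assms anti' unfolding V2_def V1_def by simp
lemma V2_J2: assumes "V2 x" shows "V1 (J2 x)"
proof -
  have s: "gsection M A x" and e: "J1 x = sneg x" using assms unfolding V2_def by auto
  have "J1 (J2 x) = sneg (J2 (sneg x))" using anti'[OF s] e by simp
  also have "\<dots> = sneg (sneg (J2 x))" using lin_sneg[OF ok ac l2 s] by simp
  also have "\<dots> = J2 x" by (simp add: sec_eq_iff secops)
  finally show ?thesis unfolding V1_def using s by simp
qed

lemma V1_smul: "smooth_fun M A g \<Longrightarrow> V1 x \<Longrightarrow> V1 (ssmul g x)"
  unfolding V1_def using com1 by simp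
lemma V2_smul: assumes g: "smooth_fun M A g" and x: "V2 x" shows "V2 (ssmul g x)"
proof -
  have s: "gsection M A x" and e: "J1 x = sneg x" using x unfolding V2_def by auto
  have "J1 (ssmul g x) = ssmul g (sneg x)" using com1[OF g s] e by simp
  also have "\<dots> = sneg (ssmul g x)" by (simp add: sec_eq_iff secops)
  finally show ?thesis unfolding V2_def using g s by simp
qed

lemma pp_smul: "smooth_fun M A g \<Longrightarrow> gsection M A \<sigma> \<Longrightarrow> pp J1 (ssmul g \<sigma>) = ssmul g (pp J1 \<sigma>)"
  unfolding pp_def using com1 by (simp add: sec_eq_iff secops algebra_simps)
lemma pm_smul: "smooth_fun M A g \<Longrightarrow> gsection M A \<sigma> \<Longrightarrow> pm J1 (ssmul g \<sigma>) = ssmul g (pm J1 \<sigma>)"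
  unfolding pm_def using com1 by (simp add: sec_eq_iff secops algebra_simps)

lemma J1_pm: "gsection M A y \<Longrightarrow> J1 (pm J1 y) = sneg (pm J1 y)" using V2_pm unfolding V2_def by blast
lemma J1_pp: "gsection M A y \<Longrightarrow> J1 (pp J1 y) = pp J1 y" using V1_pp unfolding V1_def by blast
lemma J1_J2_pm: "gsection M A y \<Longrightarrow> J1 (J2 (pm J1 y)) = J2 (pm J1 y)" using V2_J2[OF V2_pm] unfolding V1_def by blast
lemma J1_J2_pp: "gsection M A y \<Longrightarrow> J1 (J2 (pp J1 y)) = sneg (J2 (pp J1 y))" using V1_J2[OF V1_pp] unfolding V2_def by blast

lemma pp_J1: "gsection M A y \<Longrightarrow> pp J1 (J1 y) = pp J1 y" unfolding pp_def using sq1 by (simp add: sec_eq_iff secops algebra_simps)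
lemma pm_J1: "gsection M A y \<Longrightarrow> pm J1 (J1 y) = sneg (pm J1 y)" unfolding pm_def using sq1 by (simp add: sec_eq_iff secops algebra_simps)
lemma pp_J2: assumes s: "gsection M A y" shows "pp J1 (J2 y) = J2 (pm J1 y)"
proof -
  have "J2 (pm J1 y) = srsmul (1/2) (ssub (J2 y) (J2 (J1 y)))"
    unfolding pm_def lin_rsmul[OF ok ac l2 gs_ssub[OF ok ac s J1_gs[OF s]]] lin_ssub[OF ok ac l2 s J1_gs[OF s]] ..
  then show ?thesis unfolding pp_def anti'[OF s] by (simp add: sec_eq_iff secops algebra_simps)
qed
lemma pm_J2: assumes s: "gsection M A y" shows "pm J1 (J2 y) = J2 (pp J1 y)"
proof -
  have "J2 (pp J1 y) = srsmul (1/2) (sadd (J2 y) (J2 (J1 y)))"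
    unfolding pp_def lin_rsmul[OF ok ac l2 gs_sadd[OF ok ac s J1_gs[OF s]]] lin_add[OF ok ac l2 s J1_gs[OF s]] ..
  then show ?thesis unfolding pm_def anti'[OF s] by (simp add: sec_eq_iff secops algebra_simps)
qed

end



definition Dg :: "('a gsec \<Rightarrow> 'a gsec \<Rightarrow> 'a gsec) \<Rightarrow> ('a gsec \<Rightarrow> 'a gsec) \<Rightarrow> ('a gsec \<Rightarrow> 'a gsec) \<Rightarrow>
   'a gsec \<Rightarrow> 'a gsec \<Rightarrow> 'a gsec \<Rightarrow> 'a gsec \<Rightarrow> 'a gsec" where
  "Dg B J1 J2 a a' c b = sadd (sadd (pm J1 (B a b)) (J2 (pm J1 (B a (J2 c)))))
                              (sadd (pp J1 (B a' c)) (J2 (pp J1 (B a' (J2 b)))))"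

lemma ssmul_zero[simp]: "ssmul g szero = szero" by (simp add: secops)
lemma ssub_zero[simp]: "ssub x szero = x" by (simp add: secops)
lemma sadd_zero[simp]: "sadd x szero = x" "sadd szero x = x" by (simp_all add: secops)

context
  fixes M :: "'a topology" and A :: "('a set \<times> ('a \<Rightarrow> 'e::euclidean_space)) set"
    and nabla :: "'a vf \<Rightarrow> 'a vf \<Rightarrow> 'a vf" and J1 J2 :: "'a gsec \<Rightarrow> 'a gsec"
  assumes ok: "charts_ok M A" and ac: "affine_connection M A nabla"
    and j1: "gen_almost_product M A J1" and j2: "gen_almost_product M A J2"
    and anti: "\<forall>\<sigma>. gsection M A \<sigma> \<longrightarrow> J1 (J2 \<sigma>) = sneg (J2 (J1 \<sigma>))"
begin

abbreviation "S \<equiv> gsection M A"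
abbreviation "B \<equiv> nabla_bracket M A nabla"
abbreviation "Dr \<sigma> \<tau> \<equiv> Dg B J1 J2 (pp J1 \<sigma>) (pm J1 \<sigma>) (pp J1 \<tau>) (pm J1 \<tau>)"

lemmas gss_8[simp] = gs_szero[OF ok ac] gs_sadd[OF ok ac] gs_ssub[OF ok ac] gs_sneg[OF ok ac] gs_ssmul[OF ok ac]
  gs_srsmul[OF ok ac] gs_bracket[OF ok ac]
lemmas jgs[simp] = J1_gs[OF ok ac j1 j2 anti] J2_gs[OF ok ac j1 j2 anti] pp_gs[OF ok ac j1 j2 anti] pm_gs[OF ok ac j1 j2 anti]
lemmas L = lin_pp[OF ok ac j1 j2 anti] lin_pm[OF ok ac j1 j2 anti] l1[OF ok ac j1 j2 anti] l2[OF ok ac j1 j2 anti]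
lemmas LL = lin_sum[OF ok ac] lin_comp[OF ok ac] lin_brl[OF ok ac] lin_brr[OF ok ac]

lemma lin_Dr2: assumes s: "S \<sigma>" shows "lin_on S (\<lambda>\<tau>. Dr \<sigma> \<tau>)"
proof -
  note C = lin_comp[OF ok ac]
  have a: "S (pp J1 \<sigma>)" "S (pm J1 \<sigma>)" using s by simp_all
  have 1: "lin_on S (\<lambda>\<tau>. pm J1 (B (pp J1 \<sigma>) (pm J1 \<tau>)))"
    using C[OF L(2) C[OF lin_brl[OF ok ac a(1)] L(2)]] by simp
  have 2: "lin_on S (\<lambda>\<tau>. J2 (pm J1 (B (pp J1 \<sigma>) (J2 (pp J1 \<tau>)))))"
    using C[OF L(4) C[OF L(2) C[OF lin_brl[OF ok ac a(1)] C[OF L(4) L(1)]]]] by simp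
  have 3: "lin_on S (\<lambda>\<tau>. pp J1 (B (pm J1 \<sigma>) (pp J1 \<tau>)))"
    using C[OF L(1) C[OF lin_brl[OF ok ac a(2)] L(1)]] by simp
  have 4: "lin_on S (\<lambda>\<tau>. J2 (pp J1 (B (pm J1 \<sigma>) (J2 (pm J1 \<tau>)))))"
    using C[OF L(4) C[OF L(1) C[OF lin_brl[OF ok ac a(2)] C[OF L(4) L(2)]]]] by simp
  show ?thesis unfolding Dg_def
    using lin_sum[OF ok ac lin_sum[OF ok ac 1 2] lin_sum[OF ok ac 3 4]] by simp
qed

lemma lin_Dr1: assumes t: "S \<tau>" shows "lin_on S (\<lambda>\<sigma>. Dr \<sigma> \<tau>)"
proof -
  note C = lin_comp[OF ok ac]
  have a: "S (pm J1 \<tau>)" "S (J2 (pp J1 \<tau>))" "S (pp J1 \<tau>)" "S (J2 (pm J1 \<tau>))" using t by simp_all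
  have 1: "lin_on S (\<lambda>\<sigma>. pm J1 (B (pp J1 \<sigma>) (pm J1 \<tau>)))"
    using C[OF L(2) C[OF lin_brr[OF ok ac a(1)] L(1)]] by simp
  have 2: "lin_on S (\<lambda>\<sigma>. J2 (pm J1 (B (pp J1 \<sigma>) (J2 (pp J1 \<tau>)))))"
    using C[OF L(4) C[OF L(2) C[OF lin_brr[OF ok ac a(2)] L(1)]]] by simp
  have 3: "lin_on S (\<lambda>\<sigma>. pp J1 (B (pm J1 \<sigma>) (pp J1 \<tau>)))"
    using C[OF L(1) C[OF lin_brr[OF ok ac a(3)] L(2)]] by simp
  have 4: "lin_on S (\<lambda>\<sigma>. J2 (pp J1 (B (pm J1 \<sigma>) (J2 (pm J1 \<tau>)))))"
    using C[OF L(4) C[OF L(1) C[OF lin_brr[OF ok ac a(4)] L(2)]]] by simp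
  show ?thesis unfolding Dg_def
    using lin_sum[OF ok ac lin_sum[OF ok ac 1 2] lin_sum[OF ok ac 3 4]] by simp
qed

lemma fst_sf: "S y \<Longrightarrow> smooth_fun M A g \<Longrightarrow> smooth_fun M A (fst y g)"
  unfolding gsection_def using vf_smooth[OF ok] by blast

lemmas lpm = lin_pm[OF ok ac j1 j2 anti] and lpp = lin_pp[OF ok ac j1 j2 anti]
  and ll2 = l2[OF ok ac j1 j2 anti]

lemma pmB_smul1: assumes g: "smooth_fun M A g" and a: "S a" and y: "S y"
  shows "pm J1 (B (ssmul g a) y) = ssub (ssmul g (pm J1 (B a y))) (ssmul (fst y g) (pm J1 a))"
  unfolding br_smul1[OF ok ac g a y] lin_ssub[OF ok ac lpm gs_ssmul[OF ok ac g gs_bracket[OF ok ac a y]] gs_ssmul[OF ok ac fst_sf[OF y g] a]]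
    pm_smul[OF ok ac j1 j2 anti g gs_bracket[OF ok ac a y]] pm_smul[OF ok ac j1 j2 anti fst_sf[OF y g] a] ..
lemma ppB_smul1: assumes g: "smooth_fun M A g" and a: "S a" and y: "S y"
  shows "pp J1 (B (ssmul g a) y) = ssub (ssmul g (pp J1 (B a y))) (ssmul (fst y g) (pp J1 a))"
  unfolding br_smul1[OF ok ac g a y] lin_ssub[OF ok ac lpp gs_ssmul[OF ok ac g gs_bracket[OF ok ac a y]] gs_ssmul[OF ok ac fst_sf[OF y g] a]]
    pp_smul[OF ok ac j1 j2 anti g gs_bracket[OF ok ac a y]] pp_smul[OF ok ac j1 j2 anti fst_sf[OF y g] a] ..
lemma pmB_smul2: assumes g: "smooth_fun M A g" and a: "S a" and y: "S y"
  shows "pm J1 (B a (ssmul g y)) = sadd (ssmul g (pm J1 (B a y))) (ssmul (fst a g) (pm J1 y))"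
  unfolding br_smul2[OF ok ac g y a] lin_add[OF ok ac lpm gs_ssmul[OF ok ac g gs_bracket[OF ok ac a y]] gs_ssmul[OF ok ac fst_sf[OF a g] y]]
    pm_smul[OF ok ac j1 j2 anti g gs_bracket[OF ok ac a y]] pm_smul[OF ok ac j1 j2 anti fst_sf[OF a g] y] ..
lemma ppB_smul2: assumes g: "smooth_fun M A g" and a: "S a" and y: "S y"
  shows "pp J1 (B a (ssmul g y)) = sadd (ssmul g (pp J1 (B a y))) (ssmul (fst a g) (pp J1 y))"
  unfolding br_smul2[OF ok ac g y a] lin_add[OF ok ac lpp gs_ssmul[OF ok ac g gs_bracket[OF ok ac a y]] gs_ssmul[OF ok ac fst_sf[OF a g] y]]
    pp_smul[OF ok ac j1 j2 anti g gs_bracket[OF ok ac a y]] pp_smul[OF ok ac j1 j2 anti fst_sf[OF a g] y] ..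

lemmas V = V1_pp[OF ok ac j1 j2 anti] V2_pm[OF ok ac j1 j2 anti] V1_pp_id[OF ok ac j1 j2 anti] V1_pm_0[OF ok ac j1 j2 anti]
  V2_pm_id[OF ok ac j1 j2 anti] V2_pp_0[OF ok ac j1 j2 anti] V1_J2[OF ok ac j1 j2 anti] V2_J2[OF ok ac j1 j2 anti]

lemma Dr_smul1: assumes g: "smooth_fun M A g" and s: "S \<sigma>" and t: "S \<tau>"
  shows "Dr (ssmul g \<sigma>) \<tau> = ssmul g (Dr \<sigma> \<tau>)"
proof -
  have a: "S (pp J1 \<sigma>)" "S (pm J1 \<sigma>)" "S (pp J1 \<tau>)" "S (pm J1 \<tau>)" "S (J2 (pp J1 \<tau>))" "S (J2 (pm J1 \<tau>))"
    using s t by simp_all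
  have z: "pm J1 (pp J1 \<sigma>) = szero" "pp J1 (pm J1 \<sigma>) = szero" using V(4)[OF V(1)[OF s]] V(6)[OF V(2)[OF s]] by auto
  have e1: "pm J1 (B (ssmul g (pp J1 \<sigma>)) (pm J1 \<tau>)) = ssmul g (pm J1 (B (pp J1 \<sigma>) (pm J1 \<tau>)))"
    using pmB_smul1[OF g a(1) a(4)] z by simp
  have e2: "pm J1 (B (ssmul g (pp J1 \<sigma>)) (J2 (pp J1 \<tau>))) = ssmul g (pm J1 (B (pp J1 \<sigma>) (J2 (pp J1 \<tau>))))"
    using pmB_smul1[OF g a(1) a(5)] z by simp
  have e3: "pp J1 (B (ssmul g (pm J1 \<sigma>)) (pp J1 \<tau>)) = ssmul g (pp J1 (B (pm J1 \<sigma>) (pp J1 \<tau>)))"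
    using ppB_smul1[OF g a(2) a(3)] z by simp
  have e4: "pp J1 (B (ssmul g (pm J1 \<sigma>)) (J2 (pm J1 \<tau>))) = ssmul g (pp J1 (B (pm J1 \<sigma>) (J2 (pm J1 \<tau>))))"
    using ppB_smul1[OF g a(2) a(6)] z by simp
  have c2: "J2 (ssmul g (pm J1 (B (pp J1 \<sigma>) (J2 (pp J1 \<tau>))))) = ssmul g (J2 (pm J1 (B (pp J1 \<sigma>) (J2 (pp J1 \<tau>)))))"
    by (rule com2[OF ok ac j1 j2 anti g]) (simp add: a)
  have c4: "J2 (ssmul g (pp J1 (B (pm J1 \<sigma>) (J2 (pm J1 \<tau>))))) = ssmul g (J2 (pp J1 (B (pm J1 \<sigma>) (J2 (pm J1 \<tau>)))))"
    by (rule com2[OF ok ac j1 j2 anti g]) (simp add: a)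
  show ?thesis
    unfolding Dg_def pp_smul[OF ok ac j1 j2 anti g s] pm_smul[OF ok ac j1 j2 anti g s] e1 e2 e3 e4 c2 c4
    by (simp add: sec_eq_iff secops algebra_simps)
qed

lemma Dr_smul2: assumes g: "smooth_fun M A g" and s: "S \<sigma>" and t: "S \<tau>"
  shows "Dr \<sigma> (ssmul g \<tau>) = sadd (ssmul (fst \<sigma> g) \<tau>) (ssmul g (Dr \<sigma> \<tau>))"
proof -
  have a: "S (pp J1 \<sigma>)" "S (pm J1 \<sigma>)" "S (pp J1 \<tau>)" "S (pm J1 \<tau>)" "S (J2 (pp J1 \<tau>))" "S (J2 (pm J1 \<tau>))"
    using s t by simp_all
  have id: "pm J1 (pm J1 \<tau>) = pm J1 \<tau>" "pp J1 (pp J1 \<tau>) = pp J1 \<tau>"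
     "pm J1 (J2 (pp J1 \<tau>)) = J2 (pp J1 \<tau>)" "pp J1 (J2 (pm J1 \<tau>)) = J2 (pm J1 \<tau>)"
    using V(5)[OF V(2)[OF t]] V(3)[OF V(1)[OF t]] V(5)[OF V(7)[OF V(1)[OF t]]] V(3)[OF V(8)[OF V(2)[OF t]]] by auto
  have j: "J2 (ssmul g (pp J1 \<tau>)) = ssmul g (J2 (pp J1 \<tau>))" "J2 (ssmul g (pm J1 \<tau>)) = ssmul g (J2 (pm J1 \<tau>))"
    by (rule com2[OF ok ac j1 j2 anti g]; simp add: t)+
  let ?a = "pp J1 \<sigma>" and ?a' = "pm J1 \<sigma>" and ?c = "pp J1 \<tau>" and ?b = "pm J1 \<tau>"
  have f1: "pm J1 (B ?a (ssmul g ?b)) = sadd (ssmul g (pm J1 (B ?a ?b))) (ssmul (fst ?a g) ?b)"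
    using pmB_smul2[OF g a(1) a(4)] id by simp
  have f2: "J2 (pm J1 (B ?a (ssmul g (J2 ?c)))) = sadd (ssmul g (J2 (pm J1 (B ?a (J2 ?c))))) (ssmul (fst ?a g) ?c)"
  proof -
    have "J2 (pm J1 (B ?a (ssmul g (J2 ?c)))) = J2 (sadd (ssmul g (pm J1 (B ?a (J2 ?c)))) (ssmul (fst ?a g) (J2 ?c)))"
      using pmB_smul2[OF g a(1) a(5)] id by simp
    also have "\<dots> = sadd (J2 (ssmul g (pm J1 (B ?a (J2 ?c))))) (J2 (ssmul (fst ?a g) (J2 ?c)))"
      by (rule lin_add[OF ok ac ll2]) (simp_all add: a g fst_sf)
    also have "\<dots> = sadd (ssmul g (J2 (pm J1 (B ?a (J2 ?c))))) (ssmul (fst ?a g) (J2 (J2 ?c)))"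
      using com2[OF ok ac j1 j2 anti g] com2[OF ok ac j1 j2 anti fst_sf[OF a(1) g]] a by simp
    also have "\<dots> = sadd (ssmul g (J2 (pm J1 (B ?a (J2 ?c))))) (ssmul (fst ?a g) ?c)"
      using sq2[OF ok ac j1 j2 anti a(3)] by simp
    finally show ?thesis .
  qed
  have f3: "pp J1 (B ?a' (ssmul g ?c)) = sadd (ssmul g (pp J1 (B ?a' ?c))) (ssmul (fst ?a' g) ?c)"
    using ppB_smul2[OF g a(2) a(3)] id by simp
  have f4: "J2 (pp J1 (B ?a' (ssmul g (J2 ?b)))) = sadd (ssmul g (J2 (pp J1 (B ?a' (J2 ?b))))) (ssmul (fst ?a' g) ?b)"
  proof -
    have "J2 (pp J1 (B ?a' (ssmul g (J2 ?b)))) = J2 (sadd (ssmul g (pp J1 (B ?a' (J2 ?b)))) (ssmul (fst ?a' g) (J2 ?b)))"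
      using ppB_smul2[OF g a(2) a(6)] id by simp
    also have "\<dots> = sadd (J2 (ssmul g (pp J1 (B ?a' (J2 ?b))))) (J2 (ssmul (fst ?a' g) (J2 ?b)))"
      by (rule lin_add[OF ok ac ll2]) (simp_all add: a g fst_sf)
    also have "\<dots> = sadd (ssmul g (J2 (pp J1 (B ?a' (J2 ?b))))) (ssmul (fst ?a' g) (J2 (J2 ?b)))"
      using com2[OF ok ac j1 j2 anti g] com2[OF ok ac j1 j2 anti fst_sf[OF a(2) g]] a by simp
    also have "\<dots> = sadd (ssmul g (J2 (pp J1 (B ?a' (J2 ?b))))) (ssmul (fst ?a' g) ?b)"
      using sq2[OF ok ac j1 j2 anti a(4)] by simp
    finally show ?thesis .
  qed
  have sg: "fst \<sigma> g x = fst ?a g x + fst ?a' g x" for x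
    using arg_cong[OF pp_pm_sum[of J1 \<sigma>], of "\<lambda>s. fst s g x"] by (simp add: sadd_def)
  have st1: "fst \<tau> f x = fst ?c f x + fst ?b f x" for f x
    using arg_cong[OF pp_pm_sum[of J1 \<tau>], of "\<lambda>s. fst s f x"] by (simp add: sadd_def)
  have st2: "snd \<tau> X x = snd ?c X x + snd ?b X x" for X x
    using arg_cong[OF pp_pm_sum[of J1 \<tau>], of "\<lambda>s. snd s X x"] by (simp add: sadd_def)
  show ?thesis
    unfolding Dg_def pp_smul[OF ok ac j1 j2 anti g t] pm_smul[OF ok ac j1 j2 anti g t] j f1 f2 f3 f4
    unfolding sec_eq_iff secops fst_conv snd_conv sg st1 st2
    by (simp add: algebra_simps)
qed

lemmas ll1 = l1[OF ok ac j1 j2 anti]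

lemma zeros[simp]: "J2 szero = szero" "J1 szero = szero" "pm J1 szero = szero" "pp J1 szero = szero"
  using lin_zero[OF ok ac ll2] lin_zero[OF ok ac ll1] lin_zero[OF ok ac lpm] lin_zero[OF ok ac lpp] by auto
lemma bzero[simp]: "S y \<Longrightarrow> B szero y = szero" "S y \<Longrightarrow> B y szero = szero"
  using lin_zero[OF ok ac lin_brr[OF ok ac]] lin_zero[OF ok ac lin_brl[OF ok ac]] by auto

lemma lin_eqs:
  "S x \<Longrightarrow> S y \<Longrightarrow> J1 (sadd x y) = sadd (J1 x) (J1 y)"
  "S x \<Longrightarrow> S y \<Longrightarrow> J2 (sadd x y) = sadd (J2 x) (J2 y)"
  "S x \<Longrightarrow> J2 (sneg x) = sneg (J2 x)"
  "S x \<Longrightarrow> J1 (sneg x) = sneg (J1 x)"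
  "S x \<Longrightarrow> pm J1 (sneg x) = sneg (pm J1 x)"
  "S x \<Longrightarrow> pp J1 (sneg x) = sneg (pp J1 x)"
  "S x \<Longrightarrow> S y \<Longrightarrow> B x (sneg y) = sneg (B x y)"
  using lin_add[OF ok ac ll1] lin_add[OF ok ac ll2] lin_sneg[OF ok ac ll2] lin_sneg[OF ok ac ll1]
    lin_sneg[OF ok ac lpm] lin_sneg[OF ok ac lpp] lin_sneg[OF ok ac lin_brl[OF ok ac]] by auto

lemma Dr_gs: "S \<sigma> \<Longrightarrow> S \<tau> \<Longrightarrow> S (Dr \<sigma> \<tau>)"
  using lin_gs[OF ok ac lin_Dr2] by blast

lemma Dr_J1: assumes s: "S \<sigma>" and t: "S \<tau>" shows "Dr \<sigma> (J1 \<tau>) = J1 (Dr \<sigma> \<tau>)"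
proof -
  let ?a = "pp J1 \<sigma>" and ?a' = "pm J1 \<sigma>" and ?c = "pp J1 \<tau>" and ?b = "pm J1 \<tau>"
  have l: "Dr \<sigma> (J1 \<tau>) = sadd (sadd (sneg (pm J1 (B ?a ?b))) (J2 (pm J1 (B ?a (J2 ?c)))))
                              (sadd (pp J1 (B ?a' ?c)) (sneg (J2 (pp J1 (B ?a' (J2 ?b))))))"
    unfolding Dg_def pp_J1[OF ok ac j1 j2 anti t] pm_J1[OF ok ac j1 j2 anti t]
    using s t by (simp add: lin_eqs)
  have r: "J1 (Dr \<sigma> \<tau>) = sadd (sadd (sneg (pm J1 (B ?a ?b))) (J2 (pm J1 (B ?a (J2 ?c)))))
                              (sadd (pp J1 (B ?a' ?c)) (sneg (J2 (pp J1 (B ?a' (J2 ?b))))))"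
    unfolding Dg_def using s t
    by (simp add: lin_eqs J1_pm[OF ok ac j1 j2 anti] J1_pp[OF ok ac j1 j2 anti] J1_J2_pm[OF ok ac j1 j2 anti] J1_J2_pp[OF ok ac j1 j2 anti])
  show ?thesis using l r by simp
qed

lemma Dr_J2: assumes s: "S \<sigma>" and t: "S \<tau>" shows "Dr \<sigma> (J2 \<tau>) = J2 (Dr \<sigma> \<tau>)"
proof -
  let ?a = "pp J1 \<sigma>" and ?a' = "pm J1 \<sigma>" and ?c = "pp J1 \<tau>" and ?b = "pm J1 \<tau>"
  have l: "Dr \<sigma> (J2 \<tau>) = sadd (sadd (pm J1 (B ?a (J2 ?c))) (J2 (pm J1 (B ?a ?b))))
                              (sadd (pp J1 (B ?a' (J2 ?b))) (J2 (pp J1 (B ?a' ?c))))"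
    unfolding Dg_def pp_J2[OF ok ac j1 j2 anti t] pm_J2[OF ok ac j1 j2 anti t]
    using s t by (simp add: sq2[OF ok ac j1 j2 anti])
  have r: "J2 (Dr \<sigma> \<tau>) = sadd (sadd (J2 (pm J1 (B ?a ?b))) (pm J1 (B ?a (J2 ?c))))
                              (sadd (J2 (pp J1 (B ?a' ?c))) (pp J1 (B ?a' (J2 ?b))))"
    unfolding Dg_def using s t by (simp add: lin_eqs sq2[OF ok ac j1 j2 anti])
  show ?thesis unfolding l r by (simp add: sec_eq_iff secops algebra_simps)
qed

lemma Dr_tor: assumes s: "S \<sigma>" "J1 \<sigma> = \<sigma>" and t: "S \<tau>" "J1 \<tau> = sneg \<tau>"
  shows "ssub (ssub (Dr \<sigma> \<tau>) (Dr \<tau> \<sigma>)) (B \<sigma> \<tau>) = szero"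
proof -
  have p1: "pp J1 \<sigma> = \<sigma>" by (simp add: pp_def s(2) sec_eq_iff secops)
  have p2: "pm J1 \<tau> = \<tau>" by (simp add: pm_def t(2) sec_eq_iff secops)
  have v1: "V1 M A J1 \<sigma>" using V(1)[OF s(1)] p1 by simp
  have v2: "V2 M A J1 \<tau>" using V(2)[OF t(1)] p2 by simp
  note v = v1 v2
  have e: "pp J1 \<sigma> = \<sigma>" "pm J1 \<sigma> = szero" "pm J1 \<tau> = \<tau>" "pp J1 \<tau> = szero"
    using V(3)[OF v(1)] V(4)[OF v(1)] V(5)[OF v(2)] V(6)[OF v(2)] by auto
  have d1: "Dr \<sigma> \<tau> = pm J1 (B \<sigma> \<tau>)" unfolding Dg_def e using s t by simp
  have d2: "Dr \<tau> \<sigma> = pp J1 (B \<tau> \<sigma>)" unfolding Dg_def e using s t by simp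
  have d3: "B \<tau> \<sigma> = sneg (B \<sigma> \<tau>)" by (rule br_antisym[OF ok ac])
  have d4: "J1 (sneg (B \<sigma> \<tau>)) = sneg (J1 (B \<sigma> \<tau>))" using s t by (simp add: lin_eqs)
  show ?thesis unfolding d1 d2 d3 unfolding pp_def pm_def d4 by (simp add: secops fun_eq_iff field_simps)
qed

lemma ssub_eq: assumes h: "ssub u v = szero" shows "u = v"
proof -
  have a: "fst u f x = fst v f x" for f x using arg_cong[OF h, of "\<lambda>s. fst s f x"] by (simp add: secops)
  have b: "snd u X x = snd v X x" for X x using arg_cong[OF h, of "\<lambda>s. snd s X x"] by (simp add: secops)
  show ?thesis by (simp add: prod_eq_iff fun_eq_iff a b)
qed

definition "Dc \<sigma> \<tau> = (if S \<sigma> \<and> S \<tau> then Dr \<sigma> \<tau> else szero)"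

lemma Dc_conn: "gen_affine_connection M A Dc"
  unfolding gen_affine_connection_def
proof (intro conjI allI impI)
  fix \<sigma> \<tau> assume "S \<sigma>" "S \<tau>" then show "S (Dc \<sigma> \<tau>)" by (simp add: Dc_def Dr_gs)
next
  fix \<sigma> \<tau> assume "\<not> (S \<sigma> \<and> S \<tau>)" then show "Dc \<sigma> \<tau> = szero" unfolding Dc_def by auto
next
  fix \<sigma> \<sigma>' \<tau> assume a: "S \<sigma>" "S \<sigma>'" "S \<tau>"
  show "Dc (sadd \<sigma> \<sigma>') \<tau> = sadd (Dc \<sigma> \<tau>) (Dc \<sigma>' \<tau>)"
    using a lin_add[OF ok ac lin_Dr1[OF a(3)] a(1,2)] by (simp add: Dc_def)
  show "Dc \<tau> (sadd \<sigma> \<sigma>') = sadd (Dc \<tau> \<sigma>) (Dc \<tau> \<sigma>')"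
    using a lin_add[OF ok ac lin_Dr2[OF a(3)] a(1,2)] by (simp add: Dc_def)
next
  fix c \<sigma> \<tau> assume a: "S \<sigma>" "S \<tau>"
  show "Dc (srsmul c \<sigma>) \<tau> = srsmul c (Dc \<sigma> \<tau>)"
    using a lin_rsmul[OF ok ac lin_Dr1[OF a(2)] a(1)] by (simp add: Dc_def)
  show "Dc \<sigma> (srsmul c \<tau>) = srsmul c (Dc \<sigma> \<tau>)"
    using a lin_rsmul[OF ok ac lin_Dr2[OF a(1)] a(2)] by (simp add: Dc_def)
next
  fix g \<sigma> \<tau> assume a: "smooth_fun M A g" "S \<sigma>" "S \<tau>"
  show "Dc (ssmul g \<sigma>) \<tau> = ssmul g (Dc \<sigma> \<tau>)"
    using a Dr_smul1[OF a] by (simp add: Dc_def)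
  show "Dc \<sigma> (ssmul g \<tau>) = sadd (ssmul (fst \<sigma> g) \<tau>) (ssmul g (Dc \<sigma> \<tau>))"
    using a Dr_smul2[OF a] by (simp add: Dc_def)
qed

lemma ssub_self: "ssub x x = szero" by (simp add: secops fun_eq_iff)

lemma Dc_cov: "\<forall>\<sigma> \<tau>. S \<sigma> \<longrightarrow> S \<tau> \<longrightarrow>
               cov_endo Dc J1 \<sigma> \<tau> = szero \<and>
               cov_endo Dc J2 \<sigma> \<tau> = szero \<and>
               cov_endo Dc (J1 \<circ> J2) \<sigma> \<tau> = szero"
proof (intro allI impI conjI)
  fix \<sigma> \<tau> assume s: "S \<sigma>" and t: "S \<tau>"
  show "cov_endo Dc J1 \<sigma> \<tau> = szero" unfolding cov_endo_def Dc_def using s t Dr_J1[OF s t] by (simp add: ssub_self)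
  show "cov_endo Dc J2 \<sigma> \<tau> = szero" unfolding cov_endo_def Dc_def using s t Dr_J2[OF s t] by (simp add: ssub_self)
  have "Dr \<sigma> (J1 (J2 \<tau>)) = J1 (J2 (Dr \<sigma> \<tau>))" using Dr_J1[OF s J2_gs[OF ok ac j1 j2 anti t]] Dr_J2[OF s t] by simp
  then show "cov_endo Dc (J1 \<circ> J2) \<sigma> \<tau> = szero" unfolding cov_endo_def Dc_def using s t by (simp add: ssub_self)
qed

lemma Dc_tor: "\<forall>\<sigma> \<tau>. S \<sigma> \<longrightarrow> J1 \<sigma> = \<sigma> \<longrightarrow> S \<tau> \<longrightarrow> J1 \<tau> = sneg \<tau> \<longrightarrow>
               gen_torsion M A nabla Dc \<sigma> \<tau> = szero"
  unfolding gen_torsion_def Dc_def using Dr_tor by auto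

lemma uniq:
  assumes conn: "gen_affine_connection M A D"
    and cov: "\<forall>\<sigma> \<tau>. S \<sigma> \<longrightarrow> S \<tau> \<longrightarrow>
               cov_endo D J1 \<sigma> \<tau> = szero \<and>
               cov_endo D J2 \<sigma> \<tau> = szero \<and>
               cov_endo D (J1 \<circ> J2) \<sigma> \<tau> = szero"
    and tor: "\<forall>\<sigma> \<tau>. S \<sigma> \<longrightarrow> J1 \<sigma> = \<sigma> \<longrightarrow> S \<tau> \<longrightarrow> J1 \<tau> = sneg \<tau> \<longrightarrow>
               gen_torsion M A nabla D \<sigma> \<tau> = szero"
  shows "D = Dc"
proof -
  have Dgs: "S x \<Longrightarrow> S y \<Longrightarrow> S (D x y)" for x y using conn unfolding gen_affine_connection_def by blast
  have Dnon: "\<not> (S x \<and> S y) \<Longrightarrow> D x y = szero" for x y using conn unfolding gen_affine_connection_def by blast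
  have Dadd1: "S x \<Longrightarrow> S x' \<Longrightarrow> S y \<Longrightarrow> D (sadd x x') y = sadd (D x y) (D x' y)" for x x' y
    using conn unfolding gen_affine_connection_def by blast
  have Dadd2: "S x \<Longrightarrow> S x' \<Longrightarrow> S y \<Longrightarrow> D y (sadd x x') = sadd (D y x) (D y x')" for x x' y
    using conn unfolding gen_affine_connection_def by blast
  have Drs2: "S x \<Longrightarrow> S y \<Longrightarrow> D x (srsmul c y) = srsmul c (D x y)" for x y c
    using conn unfolding gen_affine_connection_def by blast
  have DJ1: "D x (J1 y) = J1 (D x y)" if "S x" "S y" for x y
  proof -
    have "cov_endo D J1 x y = szero" using cov that by blast
    then show ?thesis unfolding cov_endo_def by (rule ssub_eq)
  qed
  have DJ2: "D x (J2 y) = J2 (D x y)" if "S x" "S y" for x y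
  proof -
    have "cov_endo D J2 x y = szero" using cov that by blast
    then show ?thesis unfolding cov_endo_def by (rule ssub_eq)
  qed
  have core: "D x y = pm J1 (B x y) \<and> D y x = pp J1 (B y x)" if x: "V1 M A J1 x" and y: "V2 M A J1 y" for x y
  proof -
    have sx: "S x" and ex: "J1 x = x" using V1_gs[OF ok ac j1 j2 anti x] V1_J1[OF ok ac j1 j2 anti x] by auto
    have sy: "S y" and ey: "J1 y = sneg y" using V2_gs[OF ok ac j1 j2 anti y] V2_J1[OF ok ac j1 j2 anti y] by auto
    let ?u = "D x y" and ?v = "D y x"
    have su: "S ?u" and sv: "S ?v" using Dgs sx sy by auto
    have "J1 ?u = D x (sneg y)" using DJ1[OF sx sy] ey by simp
    also have "\<dots> = sneg ?u" unfolding sneg_rs by (rule Drs2[OF sx sy])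
    finally have u2: "V2 M A J1 ?u" using su by (intro V2_I[OF ok ac j1 j2 anti])
    have "J1 ?v = ?v" using DJ1[OF sy sx] ex by simp
    then have v1: "V1 M A J1 ?v" using sv by (intro V1_I[OF ok ac j1 j2 anti])
    have "ssub (ssub ?u ?v) (B x y) = szero" using tor sx sy ex ey unfolding gen_torsion_def by blast
    then have bxy: "B x y = ssub ?u ?v" by (rule ssub_eq[symmetric])
    have pu: "pm J1 ?u = ?u" "pp J1 ?u = szero" using V(5)[OF u2] V(6)[OF u2] by auto
    have pv: "pm J1 ?v = szero" "pp J1 ?v = ?v" using V(4)[OF v1] V(3)[OF v1] by auto
    have "pm J1 (B x y) = ?u" unfolding bxy lin_ssub[OF ok ac lpm su sv] pu pv by simp
    moreover have "pp J1 (B y x) = ?v"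
      unfolding br_antisym[OF ok ac, of y x] bxy lin_sneg[OF ok ac lpp gs_ssub[OF ok ac su sv]]
        lin_ssub[OF ok ac lpp su sv] pu pv by (simp add: secops fun_eq_iff)
    ultimately show ?thesis by simp
  qed
  show ?thesis
  proof (intro ext)
    fix \<sigma> \<tau>
    show "D \<sigma> \<tau> = Dc \<sigma> \<tau>"
    proof (cases "S \<sigma> \<and> S \<tau>")
      case False then show ?thesis using Dnon by (auto simp: Dc_def)
    next
      case True
      then have s: "S \<sigma>" and t: "S \<tau>" by auto
      let ?a = "pp J1 \<sigma>" and ?a' = "pm J1 \<sigma>" and ?c = "pp J1 \<tau>" and ?b = "pm J1 \<tau>"
      have sa: "S ?a" "S ?a'" "S ?c" "S ?b" using s t by simp_all
      have "D \<sigma> \<tau> = D (sadd ?a ?a') (sadd ?c ?b)" unfolding pp_pm_sum[of J1 \<sigma>] pp_pm_sum[of J1 \<tau>] ..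
      also have "\<dots> = sadd (D ?a (sadd ?c ?b)) (D ?a' (sadd ?c ?b))"
        by (rule Dadd1) (use sa in simp_all)
      also have "\<dots> = sadd (sadd (D ?a ?c) (D ?a ?b)) (sadd (D ?a' ?c) (D ?a' ?b))"
        using Dadd2[OF sa(3) sa(4) sa(1)] Dadd2[OF sa(3) sa(4) sa(2)] by simp
      finally have e0: "D \<sigma> \<tau> = \<dots>" .
      have e1: "D ?a ?b = pm J1 (B ?a ?b)" using core[OF V(1)[OF s] V(2)[OF t]] by simp
      have e2: "D ?a ?c = J2 (pm J1 (B ?a (J2 ?c)))"
      proof -
        have "D ?a ?c = D ?a (J2 (J2 ?c))" using sq2[OF ok ac j1 j2 anti sa(3)] by simp
        also have "\<dots> = J2 (D ?a (J2 ?c))" using DJ2 sa by simp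
        finally show ?thesis using core[OF V(1)[OF s] V(7)[OF V(1)[OF t]]] by simp
      qed
      have e3: "D ?a' ?c = pp J1 (B ?a' ?c)" using core[OF V(1)[OF t] V(2)[OF s]] by simp
      have e4: "D ?a' ?b = J2 (pp J1 (B ?a' (J2 ?b)))"
      proof -
        have "D ?a' ?b = D ?a' (J2 (J2 ?b))" using sq2[OF ok ac j1 j2 anti sa(4)] by simp
        also have "\<dots> = J2 (D ?a' (J2 ?b))" using DJ2 sa by simp
        finally show ?thesis using core[OF V(8)[OF V(2)[OF t]] V(2)[OF s]] by simp
      qed
      show ?thesis unfolding e0 e1 e2 e3 e4 Dc_def Dg_def using s t
        by (simp add: sec_eq_iff secops algebra_simps)
    qed
  qed
qed

end

theorem theorem5p3:
  fixes M :: "'a topology"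
    and A :: "('a set \<times> ('a \<Rightarrow> 'e::euclidean_space)) set"
    and nabla :: "'a vf \<Rightarrow> 'a vf \<Rightarrow> 'a vf"
    and J1 J2 :: "'a gsec \<Rightarrow> 'a gsec"
  assumes "smooth_manifold M A"
    and "affine_connection M A nabla"
    and "gen_almost_product M A J1"
    and "gen_almost_product M A J2"
    and "\<forall>\<sigma>. gsection M A \<sigma> \<longrightarrow> J1 (J2 \<sigma>) = sneg (J2 (J1 \<sigma>))"
  shows "\<exists>!D. gen_affine_connection M A D \<and>
           (\<forall>\<sigma> \<tau>. gsection M A \<sigma> \<longrightarrow> gsection M A \<tau> \<longrightarrow>
               cov_endo D J1 \<sigma> \<tau> = szero \<and>
               cov_endo D J2 \<sigma> \<tau> = szero \<and>
               cov_endo D (J1 \<circ> J2) \<sigma> \<tau> = szero) \<and>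
           (\<forall>\<sigma> \<tau>. gsection M A \<sigma> \<longrightarrow> J1 \<sigma> = \<sigma> \<longrightarrow>
                   gsection M A \<tau> \<longrightarrow> J1 \<tau> = sneg \<tau> \<longrightarrow>
               gen_torsion M A nabla D \<sigma> \<tau> = szero)"
proof -
  have ok: "charts_ok M A" using smooth_manifold_charts_ok assms(1) by blast
  note H = ok assms(2-5)
  show ?thesis
  proof (rule ex1I[of _ "Dc M A nabla J1 J2"])
    show "gen_affine_connection M A (Dc M A nabla J1 J2) \<and>
           (\<forall>\<sigma> \<tau>. gsection M A \<sigma> \<longrightarrow> gsection M A \<tau> \<longrightarrow>
               cov_endo (Dc M A nabla J1 J2) J1 \<sigma> \<tau> = szero \<and>
               cov_endo (Dc M A nabla J1 J2) J2 \<sigma> \<tau> = szero \<and>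
               cov_endo (Dc M A nabla J1 J2) (J1 \<circ> J2) \<sigma> \<tau> = szero) \<and>
           (\<forall>\<sigma> \<tau>. gsection M A \<sigma> \<longrightarrow> J1 \<sigma> = \<sigma> \<longrightarrow>
                   gsection M A \<tau> \<longrightarrow> J1 \<tau> = sneg \<tau> \<longrightarrow>
               gen_torsion M A nabla (Dc M A nabla J1 J2) \<sigma> \<tau> = szero)"
      using Dc_conn[OF H] Dc_cov[OF H] Dc_tor[OF H] by (intro conjI)
  next
    fix D assume "gen_affine_connection M A D \<and>
           (\<forall>\<sigma> \<tau>. gsection M A \<sigma> \<longrightarrow> gsection M A \<tau> \<longrightarrow>
               cov_endo D J1 \<sigma> \<tau> = szero \<and>
               cov_endo D J2 \<sigma> \<tau> = szero \<and>
               cov_endo D (J1 \<circ> J2) \<sigma> \<tau> = szero) \<and>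
           (\<forall>\<sigma> \<tau>. gsection M A \<sigma> \<longrightarrow> J1 \<sigma> = \<sigma> \<longrightarrow>
                   gsection M A \<tau> \<longrightarrow> J1 \<tau> = sneg \<tau> \<longrightarrow>
               gen_torsion M A nabla D \<sigma> \<tau> = szero)"
    then show "D = Dc M A nabla J1 J2" using uniq[OF H, of D] by (elim conjE) 
  qed
qed


end
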